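(* Suppose Assumption D holds, let $x$ be an allocation rule satisfying Assumption X, and let $\mathcal{T}$ be the class of winner-favored transfers. Define $$t_i^w(\theta)=t_i^l(\theta)=\theta X_i^{\min}(\theta)-\int_{\underline\theta}^{\theta}X_i^{\min}(z)\,dz,\qquad t_i^*(\theta,\theta')=t_i^w(\theta)x_i(\theta,\theta')+t_i^l(\theta)(1-x_i(\theta,\theta')).$$ Then $t^*$ is the unique solution to the Reduced Problem (R), and hence a solution to the Optimal Transfer Problem (P), where: (P) is to maximize $\sum_i\int_\Theta T_i(\theta)dP(\theta)$ over transfer rules $t$ with $(x,t)$ feasible and $t\in\mathcal{T}$; (R) is to maximize the same objective over transfer rules $t$ that are win-lose dependent, satisfy $U_i^{\min}(\theta)=\int_{\underline\theta}^{\theta}X_i^{\min}(z)dz$ for all $i,\theta$, and $t\in\mathcal{T}$.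
   Context: $\Theta=[\underline\theta,\bar\theta]$ with $0<\underline\theta<\bar\theta$, Borel $\sigma$-algebra $\mathcal{B}$; "$\sigma$-algebra" means sub-$\sigma$-algebra of $\mathcal{B}$; $\Delta(\Theta,\mathcal{A})$ is the set of probability measures on $(\Theta,\mathcal{A})$; $P_{\mathcal{E}}$ is the restriction of $P$ to $\mathcal{E}$. A divergence $D$ assigns to each pair $Q,P$ of probability measures on a common $\sigma$-algebra a value $D(Q\|P)\in[0,\infty]$. Assumption D: for every $\sigma$-algebra $\mathcal{A}$, $P,Q\in\Delta(\Theta,\mathcal{A})$: (D1) $D(Q\|P)=0$ if $Q=P$; (D2) if $Q\ll P$ with bounded $dQ/dP$, $\epsilon\mapsto D(\epsilon Q+(1-\epsilon)P\|P)$ is continuous on $[0,1]$; (D3) $D(Q\|P)<\infty\Rightarrow Q\ll P$; (D4) $D(Q_{\mathcal{E}}\|P_{\mathcal{E}})\le D(Q\|P)$ for sub-$\sigma$-algebras $\mathcal{E}\subset\mathcal{A}$; (D5) equality in (D4) when $dQ_{\mathcal{E}}/dP_{\mathcal{E}}=dQ/dP$ $P$-a.e. Fix atomless $P\in\Delta(\Theta,\mathcal{B})$, $\eta>0$. Two bidders $i\in\{1,2\}$. An allocation rule is bounded measurable $x=(x_1,x_2):\Theta^2\to\mathbb{R}^2$ with $x_1(\theta,\theta')\ge0$, $x_2(\theta',\theta)\ge0$, $x_1(\theta,\theta')+x_2(\theta',\theta)\le1$; a transfer rule is bounded measurable $t=(t_1,t_2):\Theta^2\to\mathbb{R}^2$.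 $X_i(\theta)=\int x_i(\theta,\theta')dP(\theta')$, $X_i^{\min}(\theta)=\inf_Q\{\int x_i(\theta,\theta')dQ(\theta'):D(Q\|P)\le\eta\}$, $U_i^{\min}(\theta)=\inf_Q\{\int[\theta x_i(\theta,\theta')-t_i(\theta,\theta')]dQ(\theta'):D(Q\|P)\le\eta\}$, $T_i(\theta)=\int t_i(\theta,\theta')dP(\theta')$, $Q$ over $\Delta(\Theta,\mathcal{B})$. $(x,t)$ is incentive compatible if for all $i,\theta$, $\theta\in\arg\max_{\hat\theta}\inf_Q\{\int[\theta x_i(\hat\theta,\theta')-t_i(\hat\theta,\theta')]dQ(\theta'):D(Q\|P)\le\eta\}$; individually rational if $U_i^{\min}\ge0$; feasible if both. Assumption X: (i) $x_i(\theta,\theta')\in\{0,1\}$ for $\theta'\ne\theta$; (ii) $X_i(\theta)=1\Rightarrow\theta=\bar\theta$; (iii) $X_i^{\min}$ non-decreasing. $t$ is a winner-favored transfer if for every $i$, every $\theta<\bar\theta$ and all $\theta^w,\theta^l$ with $x_i(\theta,\theta^w)=1$ and $x_i(\theta,\theta^l)=0$, $t_i(\theta,\theta^w)\le t_i(\theta,\theta^l)$. $t$ is win-lose dependent if there exist $t_i^w,t_i^l:\Theta\to\mathbb{R}$ with $t_i(\theta,\theta')=t_i^w(\theta)x_i(\theta,\theta')+t_i^l(\theta)[1-x_i(\theta,\theta')]$ and $\theta-t_i^w(\theta)\ge-t_i^l(\theta)$ for all $i,\theta,\theta'$. *)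

theory Defs
  imports "HOL-Probability.Probability"
begin

definition Theta :: "real \<Rightarrow> real \<Rightarrow> real set" where
  "Theta lo hi = {lo..hi}"

definition BTheta :: "real \<Rightarrow> real \<Rightarrow> real set set" where
  "BTheta lo hi = sets (restrict_space borel (Theta lo hi))"

definition sub_sigma :: "real \<Rightarrow> real \<Rightarrow> real set set \<Rightarrow> bool" where
  "sub_sigma lo hi A \<longleftrightarrow> sigma_algebra (Theta lo hi) A \<and> A \<subseteq> BTheta lo hi"

definition Delta :: "real \<Rightarrow> real \<Rightarrow> real set set \<Rightarrow> real measure set" where
  "Delta lo hi A = {Q. prob_space Q \<and> space Q = Theta lo hi \<and> sets Q = A}"

definition restr :: "real measure \<Rightarrow> real set set \<Rightarrow> real measure" where
  "restr Q E = measure_of (space Q) E (emeasure Q)"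

definition mix :: "real \<Rightarrow> real measure \<Rightarrow> real measure \<Rightarrow> real measure" where
  "mix e Q P = measure_of (space P) (sets P)
      (\<lambda>S. ennreal e * emeasure Q S + ennreal (1 - e) * emeasure P S)"

definition assumption_D :: "real \<Rightarrow> real \<Rightarrow> (real measure \<Rightarrow> real measure \<Rightarrow> ennreal) \<Rightarrow> bool" where
  "assumption_D lo hi D \<longleftrightarrow>
    (\<forall>A P Q. sub_sigma lo hi A \<longrightarrow> P \<in> Delta lo hi A \<longrightarrow> Q \<in> Delta lo hi A \<longrightarrow>
      (Q = P \<longrightarrow> D Q P = 0) \<and>
      ((\<exists>f C. f \<in> borel_measurable P \<and> (\<forall>\<theta>\<in>space P. f \<theta> \<le> ennreal C) \<and> Q = density P f)
         \<longrightarrow> continuous_on {0..1} (\<lambda>e. D (mix e Q P) P)) \<and>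
      (D Q P < top \<longrightarrow> absolutely_continuous P Q) \<and>
      (\<forall>E. sub_sigma lo hi E \<longrightarrow> E \<subseteq> A \<longrightarrow>
          D (restr Q E) (restr P E) \<le> D Q P \<and>
          ((absolutely_continuous P Q \<and>
            (AE \<theta> in P. RN_deriv (restr P E) (restr Q E) \<theta> = RN_deriv P Q \<theta>))
             \<longrightarrow> D (restr Q E) (restr P E) = D Q P)))"

definition atomless :: "'a measure \<Rightarrow> bool" where
  "atomless M \<longleftrightarrow> (\<forall>A\<in>sets M. 0 < emeasure M A \<longrightarrow>
      (\<exists>B\<in>sets M. B \<subseteq> A \<and> 0 < emeasure M B \<and> emeasure M B < emeasure M A))"

definition ambiguity_set ::
  "real \<Rightarrow> real \<Rightarrow> (real measure \<Rightarrow> real measure \<Rightarrow> ennreal) \<Rightarrow> real measure \<Rightarrow> real \<Rightarrow> real measure set" where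
  "ambiguity_set lo hi D P \<eta> = {Q \<in> Delta lo hi (BTheta lo hi). D Q P \<le> ennreal \<eta>}"

definition worst ::
  "real \<Rightarrow> real \<Rightarrow> (real measure \<Rightarrow> real measure \<Rightarrow> ennreal) \<Rightarrow> real measure \<Rightarrow> real \<Rightarrow> (real \<Rightarrow> real) \<Rightarrow> real" where
  "worst lo hi D P \<eta> g = (INF Q \<in> ambiguity_set lo hi D P \<eta>. \<integral>\<theta>'. g \<theta>' \<partial>Q)"

definition Xbar :: "real measure \<Rightarrow> (nat \<Rightarrow> real \<Rightarrow> real \<Rightarrow> real) \<Rightarrow> nat \<Rightarrow> real \<Rightarrow> real" where
  "Xbar P x i \<theta> = (\<integral>\<theta>'. x i \<theta> \<theta>' \<partial>P)"

definition Tbar :: "real measure \<Rightarrow> (nat \<Rightarrow> real \<Rightarrow> real \<Rightarrow> real) \<Rightarrow> nat \<Rightarrow> real \<Rightarrow> real" where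
  "Tbar P t i \<theta> = (\<integral>\<theta>'. t i \<theta> \<theta>' \<partial>P)"

definition Xmin ::
  "real \<Rightarrow> real \<Rightarrow> (real measure \<Rightarrow> real measure \<Rightarrow> ennreal) \<Rightarrow> real measure \<Rightarrow> real \<Rightarrow>
   (nat \<Rightarrow> real \<Rightarrow> real \<Rightarrow> real) \<Rightarrow> nat \<Rightarrow> real \<Rightarrow> real" where
  "Xmin lo hi D P \<eta> x i \<theta> = worst lo hi D P \<eta> (\<lambda>\<theta>'. x i \<theta> \<theta>')"

definition Umin ::
  "real \<Rightarrow> real \<Rightarrow> (real measure \<Rightarrow> real measure \<Rightarrow> ennreal) \<Rightarrow> real measure \<Rightarrow> real \<Rightarrow>
   (nat \<Rightarrow> real \<Rightarrow> real \<Rightarrow> real) \<Rightarrow> (nat \<Rightarrow> real \<Rightarrow> real \<Rightarrow> real) \<Rightarrow> nat \<Rightarrow> real \<Rightarrow> real" where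
  "Umin lo hi D P \<eta> x t i \<theta> = worst lo hi D P \<eta> (\<lambda>\<theta>'. \<theta> * x i \<theta> \<theta>' - t i \<theta> \<theta>')"

definition bounded_measurable_rule :: "real \<Rightarrow> real \<Rightarrow> (nat \<Rightarrow> real \<Rightarrow> real \<Rightarrow> real) \<Rightarrow> bool" where
  "bounded_measurable_rule lo hi f \<longleftrightarrow>
    (\<forall>i\<in>{1,2}. (\<lambda>z. f i (fst z) (snd z)) \<in> borel_measurable
        (restrict_space borel (Theta lo hi) \<Otimes>\<^sub>M restrict_space borel (Theta lo hi)) \<and>
      (\<exists>C. \<forall>\<theta>\<in>Theta lo hi. \<forall>\<theta>'\<in>Theta lo hi. \<bar>f i \<theta> \<theta>'\<bar> \<le> C))"

definition allocation_rule :: "real \<Rightarrow> real \<Rightarrow> (nat \<Rightarrow> real \<Rightarrow> real \<Rightarrow> real) \<Rightarrow> bool" where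
  "allocation_rule lo hi x \<longleftrightarrow> bounded_measurable_rule lo hi x \<and>
    (\<forall>\<theta>\<in>Theta lo hi. \<forall>\<theta>'\<in>Theta lo hi.
       x 1 \<theta> \<theta>' \<ge> 0 \<and> x 2 \<theta>' \<theta> \<ge> 0 \<and> x 1 \<theta> \<theta>' + x 2 \<theta>' \<theta> \<le> 1)"

definition transfer_rule :: "real \<Rightarrow> real \<Rightarrow> (nat \<Rightarrow> real \<Rightarrow> real \<Rightarrow> real) \<Rightarrow> bool" where
  "transfer_rule lo hi t \<longleftrightarrow> bounded_measurable_rule lo hi t"

definition incentive_compatible ::
  "real \<Rightarrow> real \<Rightarrow> (real measure \<Rightarrow> real measure \<Rightarrow> ennreal) \<Rightarrow> real measure \<Rightarrow> real \<Rightarrow>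
   (nat \<Rightarrow> real \<Rightarrow> real \<Rightarrow> real) \<Rightarrow> (nat \<Rightarrow> real \<Rightarrow> real \<Rightarrow> real) \<Rightarrow> bool" where
  "incentive_compatible lo hi D P \<eta> x t \<longleftrightarrow>
    (\<forall>i\<in>{1,2}. \<forall>\<theta>\<in>Theta lo hi. \<forall>\<theta>h\<in>Theta lo hi.
       worst lo hi D P \<eta> (\<lambda>\<theta>'. \<theta> * x i \<theta>h \<theta>' - t i \<theta>h \<theta>')
         \<le> worst lo hi D P \<eta> (\<lambda>\<theta>'. \<theta> * x i \<theta> \<theta>' - t i \<theta> \<theta>'))"

definition individually_rational ::
  "real \<Rightarrow> real \<Rightarrow> (real measure \<Rightarrow> real measure \<Rightarrow> ennreal) \<Rightarrow> real measure \<Rightarrow> real \<Rightarrow>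
   (nat \<Rightarrow> real \<Rightarrow> real \<Rightarrow> real) \<Rightarrow> (nat \<Rightarrow> real \<Rightarrow> real \<Rightarrow> real) \<Rightarrow> bool" where
  "individually_rational lo hi D P \<eta> x t \<longleftrightarrow>
    (\<forall>i\<in>{1,2}. \<forall>\<theta>\<in>Theta lo hi. Umin lo hi D P \<eta> x t i \<theta> \<ge> 0)"

definition feasible ::
  "real \<Rightarrow> real \<Rightarrow> (real measure \<Rightarrow> real measure \<Rightarrow> ennreal) \<Rightarrow> real measure \<Rightarrow> real \<Rightarrow>
   (nat \<Rightarrow> real \<Rightarrow> real \<Rightarrow> real) \<Rightarrow> (nat \<Rightarrow> real \<Rightarrow> real \<Rightarrow> real) \<Rightarrow> bool" where
  "feasible lo hi D P \<eta> x t \<longleftrightarrow>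
    incentive_compatible lo hi D P \<eta> x t \<and> individually_rational lo hi D P \<eta> x t"

definition assumption_X ::
  "real \<Rightarrow> real \<Rightarrow> (real measure \<Rightarrow> real measure \<Rightarrow> ennreal) \<Rightarrow> real measure \<Rightarrow> real \<Rightarrow>
   (nat \<Rightarrow> real \<Rightarrow> real \<Rightarrow> real) \<Rightarrow> bool" where
  "assumption_X lo hi D P \<eta> x \<longleftrightarrow>
    (\<forall>i\<in>{1,2}. \<forall>\<theta>\<in>Theta lo hi. \<forall>\<theta>'\<in>Theta lo hi. \<theta>' \<noteq> \<theta> \<longrightarrow> x i \<theta> \<theta>' \<in> {0, 1}) \<and>
    (\<forall>i\<in>{1,2}. \<forall>\<theta>\<in>Theta lo hi. Xbar P x i \<theta> = 1 \<longrightarrow> \<theta> = hi) \<and>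
    (\<forall>i\<in>{1,2}. mono_on (Theta lo hi) (Xmin lo hi D P \<eta> x i))"

definition winner_favored ::
  "real \<Rightarrow> real \<Rightarrow> (nat \<Rightarrow> real \<Rightarrow> real \<Rightarrow> real) \<Rightarrow> (nat \<Rightarrow> real \<Rightarrow> real \<Rightarrow> real) \<Rightarrow> bool" where
  "winner_favored lo hi x t \<longleftrightarrow>
    (\<forall>i\<in>{1,2}. \<forall>\<theta>\<in>Theta lo hi. \<forall>\<theta>w\<in>Theta lo hi. \<forall>\<theta>l\<in>Theta lo hi.
       \<theta> < hi \<longrightarrow> x i \<theta> \<theta>w = 1 \<longrightarrow> x i \<theta> \<theta>l = 0 \<longrightarrow> t i \<theta> \<theta>w \<le> t i \<theta> \<theta>l)"

definition win_lose_dependent ::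
  "real \<Rightarrow> real \<Rightarrow> (nat \<Rightarrow> real \<Rightarrow> real \<Rightarrow> real) \<Rightarrow> (nat \<Rightarrow> real \<Rightarrow> real \<Rightarrow> real) \<Rightarrow> bool" where
  "win_lose_dependent lo hi x t \<longleftrightarrow>
    (\<exists>tw tl :: nat \<Rightarrow> real \<Rightarrow> real.
       \<forall>i\<in>{1,2}. \<forall>\<theta>\<in>Theta lo hi. \<forall>\<theta>'\<in>Theta lo hi.
         t i \<theta> \<theta>' = tw i \<theta> * x i \<theta> \<theta>' + tl i \<theta> * (1 - x i \<theta> \<theta>') \<and>
         \<theta> - tw i \<theta> \<ge> - tl i \<theta>)"

definition objective :: "real measure \<Rightarrow> (nat \<Rightarrow> real \<Rightarrow> real \<Rightarrow> real) \<Rightarrow> real" where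
  "objective P t = (\<Sum>i\<in>{1::nat,2}. \<integral>\<theta>. Tbar P t i \<theta> \<partial>P)"

definition admissible_P ::
  "real \<Rightarrow> real \<Rightarrow> (real measure \<Rightarrow> real measure \<Rightarrow> ennreal) \<Rightarrow> real measure \<Rightarrow> real \<Rightarrow>
   (nat \<Rightarrow> real \<Rightarrow> real \<Rightarrow> real) \<Rightarrow> (nat \<Rightarrow> real \<Rightarrow> real \<Rightarrow> real) \<Rightarrow> bool" where
  "admissible_P lo hi D P \<eta> x t \<longleftrightarrow>
    transfer_rule lo hi t \<and> feasible lo hi D P \<eta> x t \<and> winner_favored lo hi x t"

definition solves_P ::
  "real \<Rightarrow> real \<Rightarrow> (real measure \<Rightarrow> real measure \<Rightarrow> ennreal) \<Rightarrow> real measure \<Rightarrow> real \<Rightarrow>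
   (nat \<Rightarrow> real \<Rightarrow> real \<Rightarrow> real) \<Rightarrow> (nat \<Rightarrow> real \<Rightarrow> real \<Rightarrow> real) \<Rightarrow> bool" where
  "solves_P lo hi D P \<eta> x t \<longleftrightarrow> admissible_P lo hi D P \<eta> x t \<and>
    (\<forall>t'. admissible_P lo hi D P \<eta> x t' \<longrightarrow> objective P t' \<le> objective P t)"

definition admissible_R ::
  "real \<Rightarrow> real \<Rightarrow> (real measure \<Rightarrow> real measure \<Rightarrow> ennreal) \<Rightarrow> real measure \<Rightarrow> real \<Rightarrow>
   (nat \<Rightarrow> real \<Rightarrow> real \<Rightarrow> real) \<Rightarrow> (nat \<Rightarrow> real \<Rightarrow> real \<Rightarrow> real) \<Rightarrow> bool" where
  "admissible_R lo hi D P \<eta> x t \<longleftrightarrow>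
    transfer_rule lo hi t \<and> win_lose_dependent lo hi x t \<and>
    (\<forall>i\<in>{1,2}. \<forall>\<theta>\<in>Theta lo hi.
       Umin lo hi D P \<eta> x t i \<theta> = integral {lo..\<theta>} (Xmin lo hi D P \<eta> x i)) \<and>
    winner_favored lo hi x t"

definition solves_R ::
  "real \<Rightarrow> real \<Rightarrow> (real measure \<Rightarrow> real measure \<Rightarrow> ennreal) \<Rightarrow> real measure \<Rightarrow> real \<Rightarrow>
   (nat \<Rightarrow> real \<Rightarrow> real \<Rightarrow> real) \<Rightarrow> (nat \<Rightarrow> real \<Rightarrow> real \<Rightarrow> real) \<Rightarrow> bool" where
  "solves_R lo hi D P \<eta> x t \<longleftrightarrow> admissible_R lo hi D P \<eta> x t \<and>
    (\<forall>t'. admissible_R lo hi D P \<eta> x t' \<longrightarrow> objective P t' \<le> objective P t)"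

definition tstar_w ::
  "real \<Rightarrow> real \<Rightarrow> (real measure \<Rightarrow> real measure \<Rightarrow> ennreal) \<Rightarrow> real measure \<Rightarrow> real \<Rightarrow>
   (nat \<Rightarrow> real \<Rightarrow> real \<Rightarrow> real) \<Rightarrow> nat \<Rightarrow> real \<Rightarrow> real" where
  "tstar_w lo hi D P \<eta> x i \<theta> = \<theta> * Xmin lo hi D P \<eta> x i \<theta> - integral {lo..\<theta>} (Xmin lo hi D P \<eta> x i)"

definition tstar_l ::
  "real \<Rightarrow> real \<Rightarrow> (real measure \<Rightarrow> real measure \<Rightarrow> ennreal) \<Rightarrow> real measure \<Rightarrow> real \<Rightarrow>
   (nat \<Rightarrow> real \<Rightarrow> real \<Rightarrow> real) \<Rightarrow> nat \<Rightarrow> real \<Rightarrow> real" where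
  "tstar_l lo hi D P \<eta> x i \<theta> = \<theta> * Xmin lo hi D P \<eta> x i \<theta> - integral {lo..\<theta>} (Xmin lo hi D P \<eta> x i)"

definition tstar ::
  "real \<Rightarrow> real \<Rightarrow> (real measure \<Rightarrow> real measure \<Rightarrow> ennreal) \<Rightarrow> real measure \<Rightarrow> real \<Rightarrow>
   (nat \<Rightarrow> real \<Rightarrow> real \<Rightarrow> real) \<Rightarrow> nat \<Rightarrow> real \<Rightarrow> real \<Rightarrow> real" where
  "tstar lo hi D P \<eta> x i \<theta> \<theta>' =
     tstar_w lo hi D P \<eta> x i \<theta> * x i \<theta> \<theta>' + tstar_l lo hi D P \<eta> x i \<theta> * (1 - x i \<theta> \<theta>')"

end

theory Submission
  imports Defs
begin


lemma envelope_lower: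
  fixes F f :: "real \<Rightarrow> real" and a b :: real
  assumes ab: "a \<le> b" and mono: "mono_on {a..b} f"
    and fb: "\<And>y. y \<in> {a..b} \<Longrightarrow> 0 \<le> f y \<and> f y \<le> 1"
    and inc: "\<And>r s. a \<le> r \<Longrightarrow> r \<le> s \<Longrightarrow> s \<le> b \<Longrightarrow> (s - r) * f r \<le> F s - F r"
  shows "integral {a..b} f \<le> F b - F a"
proof -
  have intg: "f integrable_on {c..d}" if "a \<le> c" "d \<le> b" for c d
  proof -
    have "mono_on {c..d} f" using mono_on_subset[OF mono] that by auto
    then show ?thesis by (rule integrable_on_mono_on)
  qed
  have key: "integral {a..b} f - (b - a) / real n \<le> F b - F a" if n: "n > 0" for n :: nat
  proof -
    define h where "h = (b - a) / real n"
    define p where "p k = a + real k * h" for k :: nat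
    have h0: "0 \<le> h" using ab n by (simp add: h_def)
    have pn: "p n = b" using n by (simp add: p_def h_def)
    have pmono: "p k \<le> p m" if "k \<le> m" for k m using that h0 by (simp add: p_def mult_right_mono)
    have pa: "a \<le> p k" for k using h0 by (simp add: p_def)
    have pb: "p k \<le> b" if "k \<le> n" for k using pmono[OF that] pn by simp
    have "k \<le> n \<Longrightarrow> integral {a..p k} f - h * (f (p k) - f a) \<le> F (p k) - F a" for k
    proof (induction k)
      case 0
      then show ?case by (simp add: p_def)
    next
      case (Suc k)
      have k: "k \<le> n" using Suc by simp
      have step: "p (Suc k) - p k = h" by (simp add: p_def algebra_simps)
      have i1: "h * f (p k) \<le> F (p (Suc k)) - F (p k)"
        using inc[of "p k" "p (Suc k)"] pa pmono[of k "Suc k"] pb[OF Suc.prems] step by simp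
      have comb: "integral {a..p k} f + integral {p k..p (Suc k)} f = integral {a..p (Suc k)} f"
        by (rule Henstock_Kurzweil_Integration.integral_combine)
           (use pa pmono[of k "Suc k"] intg[of a "p (Suc k)"] pb[OF Suc.prems] in auto)
      have "integral {p k..p (Suc k)} f \<le> integral {p k..p (Suc k)} (\<lambda>_. f (p (Suc k)))"
      proof (rule integral_le)
        show "f integrable_on {p k..p (Suc k)}" using intg pa pb[OF Suc.prems] by auto
        show "(\<lambda>_. f (p (Suc k))) integrable_on {p k..p (Suc k)}" by (rule integrable_const_ivl)
        fix y assume y: "y \<in> {p k..p (Suc k)}"
          have "a \<le> y" "y \<le> b" using y pa[of k] pb[OF Suc.prems] by auto
          then show "f y \<le> f (p (Suc k))" using mono_onD[OF mono, of y "p (Suc k)"] y pa pb[OF Suc.prems] by auto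
      qed
      also have "\<dots> = h * f (p (Suc k))"
        using pmono[of k "Suc k"] step by simp
      finally have i2: "integral {p k..p (Suc k)} f \<le> h * f (p (Suc k))" .
      show ?case using Suc.IH[OF k] i1 i2 comb unfolding right_diff_distrib by linarith
    qed
    from this[of n] pn have "integral {a..b} f - h * (f b - f a) \<le> F b - F a" by simp
    moreover have "h * (f b - f a) \<le> h"
      using fb[of a] fb[of b] ab h0 by (simp add: mult_left_le)
    ultimately show ?thesis unfolding h_def by linarith
  qed
  show ?thesis
  proof (rule ccontr)
    assume "\<not> ?thesis"
    then have gap: "0 < integral {a..b} f - (F b - F a)" by simp
    obtain n :: nat where n: "(b - a) / (integral {a..b} f - (F b - F a)) < real n"
      using reals_Archimedean2 by blast
    have "0 \<le> (b - a) / (integral {a..b} f - (F b - F a))" using ab gap by simp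
    then have npos: "n > 0" using n by (cases "n = 0") auto
    have "(b - a) < real n * (integral {a..b} f - (F b - F a))"
      using n gap by (simp add: divide_less_eq mult.commute)
    then have "(b - a) / real n < integral {a..b} f - (F b - F a)"
      using npos by (simp add: divide_less_eq mult.commute)
    with key[OF npos] show False by linarith
  qed
qed



locale pset =
  fixes lo hi :: real and D :: "real measure \<Rightarrow> real measure \<Rightarrow> ennreal"
    and P :: "real measure" and \<eta> :: real and x :: "nat \<Rightarrow> real \<Rightarrow> real \<Rightarrow> real"
  assumes lo_pos: "0 < lo" and lo_hi: "lo < hi"
    and AD: "assumption_D lo hi D"
    and PD: "P \<in> Delta lo hi (BTheta lo hi)" and AL: "atomless P"
    and eta: "0 < \<eta>"
    and AR: "allocation_rule lo hi x"
    and AX: "assumption_X lo hi D P \<eta> x"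
begin

abbreviation "M \<equiv> restrict_space borel {lo..hi}"
abbreviation "amb \<equiv> ambiguity_set lo hi D P \<eta>"
abbreviation "wst \<equiv> worst lo hi D P \<eta>"

lemma space_M: "space M = {lo..hi}" by (simp add: space_restrict_space)

lemma BT: "BTheta lo hi = sets M" by (simp add: BTheta_def Theta_def)

lemma sets_P: "sets P = sets M" and space_P: "space P = {lo..hi}" and prob_P: "prob_space P"
  using PD by (auto simp: Delta_def BT Theta_def)

lemma sub_B: "sub_sigma lo hi (BTheta lo hi)"
  unfolding sub_sigma_def BT Theta_def
  using sets.sigma_algebra_axioms[of M] space_M by simp

lemma amb_iff: "Q \<in> amb \<longleftrightarrow> prob_space Q \<and> space Q = {lo..hi} \<and> sets Q = sets M \<and> D Q P \<le> ennreal \<eta>"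
  by (auto simp: ambiguity_set_def Delta_def BT Theta_def)

lemma Delta_iff: "Q \<in> Delta lo hi (BTheta lo hi) \<longleftrightarrow> prob_space Q \<and> space Q = {lo..hi} \<and> sets Q = sets M"
  by (auto simp: Delta_def BT Theta_def)

lemma D1: "D P P = 0"
  using AD sub_B PD unfolding assumption_D_def by blast

lemma P_amb: "P \<in> amb"
  using D1 PD by (simp add: ambiguity_set_def)

lemma amb_ne: "amb \<noteq> {}" using P_amb by blast

lemma amb_ac: assumes "Q \<in> amb" shows "absolutely_continuous P Q"
proof -
  have "Q \<in> Delta lo hi (BTheta lo hi)" "D Q P \<le> ennreal \<eta>" using assms by (auto simp: ambiguity_set_def)
  moreover then have "D Q P < top" using ennreal_less_top le_less_trans by blast
  ultimately show ?thesis using AD sub_B PD unfolding assumption_D_def by blast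
qed

lemma P_single: assumes "t \<in> {lo..hi}" shows "emeasure P {t} = 0"
proof (rule ccontr)
  assume "emeasure P {t} \<noteq> 0"
  then have pos: "0 < emeasure P {t}" by (simp add: zero_less_iff_neq_zero)
  have st: "{t} \<in> sets P" using assms by (simp add: sets_P sets_restrict_space_iff space_M)
  from AL st pos obtain B where B: "B \<in> sets P" "B \<subseteq> {t}" "0 < emeasure P B" "emeasure P B < emeasure P {t}"
    unfolding atomless_def by blast
  have "B = {} \<or> B = {t}" using B(2) by blast
  then show False using B(3,4) by auto
qed

lemma Q_single: assumes "Q \<in> amb" "t \<in> {lo..hi}" shows "emeasure Q {t} = 0"
  using absolutely_continuousD[OF amb_ac[OF assms(1)]] P_single[OF assms(2)] assms(2)
  by (simp add: sets_P sets_restrict_space_iff space_M)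

lemma x_bounds: assumes "i \<in> {1,2}" "t \<in> {lo..hi}" "s \<in> {lo..hi}"
  shows "0 \<le> x i t s" "x i t s \<le> 1"
proof -
  have A: "\<forall>\<theta>\<in>{lo..hi}. \<forall>\<theta>'\<in>{lo..hi}. x 1 \<theta> \<theta>' \<ge> 0 \<and> x 2 \<theta>' \<theta> \<ge> 0 \<and> x 1 \<theta> \<theta>' + x 2 \<theta>' \<theta> \<le> 1"
    using AR by (simp add: allocation_rule_def Theta_def)
  show "0 \<le> x i t s" using A assms by fastforce
  show "x i t s \<le> 1" using A assms by fastforce
qed

definition bm :: "(real \<Rightarrow> real) \<Rightarrow> bool" where
  "bm g \<longleftrightarrow> g \<in> borel_measurable M \<and> (\<exists>C. \<forall>y\<in>{lo..hi}. \<bar>g y\<bar> \<le> C)"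

lemma rule_bm: assumes "bounded_measurable_rule lo hi f" "i \<in> {1,2}" "t \<in> {lo..hi}"
  shows "bm (f i t)"
proof -
  have m: "(\<lambda>z. f i (fst z) (snd z)) \<in> borel_measurable (M \<Otimes>\<^sub>M M)"
    and C: "\<exists>C. \<forall>\<theta>\<in>{lo..hi}. \<forall>\<theta>'\<in>{lo..hi}. \<bar>f i \<theta> \<theta>'\<bar> \<le> C"
    using assms by (auto simp: bounded_measurable_rule_def Theta_def)
  have "(\<lambda>y. f i t y) \<in> borel_measurable M"
    using measurable_Pair2[OF m, of t] assms(3) space_M by simp
  then show ?thesis using C assms(3) unfolding bm_def by fastforce
qed

lemma x_bm: "i \<in> {1,2} \<Longrightarrow> t \<in> {lo..hi} \<Longrightarrow> bm (x i t)"
  using rule_bm AR by (auto simp: allocation_rule_def)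

lemma bm_intros:
  "bm f \<Longrightarrow> bm g \<Longrightarrow> bm (\<lambda>y. f y + g y)"
  "bm f \<Longrightarrow> bm g \<Longrightarrow> bm (\<lambda>y. f y - g y)"
  "bm f \<Longrightarrow> bm (\<lambda>y. c * f y)"
  "bm (\<lambda>y. c)"
proof -
  show "bm f \<Longrightarrow> bm g \<Longrightarrow> bm (\<lambda>y. f y + g y)"
    unfolding bm_def by (auto intro!: exI[where x="_ + _"] abs_triangle_ineq[THEN order_trans] add_mono)
  show "bm f \<Longrightarrow> bm g \<Longrightarrow> bm (\<lambda>y. f y - g y)"
    unfolding bm_def by (auto intro!: exI[where x="_ + _"] abs_triangle_ineq4[THEN order_trans] add_mono)
  show "bm f \<Longrightarrow> bm (\<lambda>y. c * f y)"
    unfolding bm_def by (auto 0 3 intro!: exI[where x="\<bar>c\<bar> * _"] simp: abs_mult intro: mult_left_mono)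
  show "bm (\<lambda>y. c)" unfolding bm_def by auto
qed

lemma bm_cong: "bm f \<Longrightarrow> (\<And>y. y \<in> {lo..hi} \<Longrightarrow> f y = g y) \<Longrightarrow> bm g"
  unfolding bm_def using measurable_cong[of M f g] space_M by auto

lemma amb_meas: "Q \<in> amb \<Longrightarrow> bm g \<Longrightarrow> g \<in> borel_measurable Q"
  using measurable_cong_sets[of Q M] amb_iff bm_def by auto

lemma amb_int: assumes "Q \<in> amb" "bm g" shows "integrable Q g"
proof -
  interpret prob_space Q using assms amb_iff by auto
  obtain C where C: "\<forall>y\<in>{lo..hi}. \<bar>g y\<bar> \<le> C" using assms bm_def by auto
  show ?thesis
    by (rule integrable_const_bound[where B=C]) (use C amb_iff assms amb_meas in auto)
qed

lemma amb_int_bound: assumes "Q \<in> amb" "\<forall>y\<in>{lo..hi}. \<bar>g y\<bar> \<le> C" "bm g"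
  shows "\<bar>\<integral>y. g y \<partial>Q\<bar> \<le> C"
proof -
  interpret prob_space Q using assms amb_iff by auto
  have "\<bar>\<integral>y. g y \<partial>Q\<bar> \<le> \<integral>y. \<bar>g y\<bar> \<partial>Q" by (rule integral_abs_bound)
  also have "\<dots> \<le> \<integral>y. C \<partial>Q"
    by (rule integral_mono) (use assms amb_int amb_iff in \<open>auto intro: integrable_abs\<close>)
  also have "\<dots> = C" by (simp add: prob_space)
  finally show ?thesis .
qed

lemma amb_int_le: assumes "Q \<in> amb" "bm g" "bm f" "\<And>y. y \<in> {lo..hi} \<Longrightarrow> g y \<le> f y"
  shows "(\<integral>y. g y \<partial>Q) \<le> (\<integral>y. f y \<partial>Q)"
  by (rule integral_mono) (use assms amb_int amb_iff in auto)

lemma amb_int_cong: assumes "Q \<in> amb" "\<And>y. y \<in> {lo..hi} \<Longrightarrow> g y = f y"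
  shows "(\<integral>y. g y \<partial>Q) = (\<integral>y. f y \<partial>Q)"
  using assms amb_iff by (intro Bochner_Integration.integral_cong) auto

lemma bdd_wst: assumes "bm g" shows "bdd_below ((\<lambda>Q. \<integral>y. g y \<partial>Q) ` amb)"
proof -
  obtain C where C: "\<forall>y\<in>{lo..hi}. \<bar>g y\<bar> \<le> C" using assms bm_def by auto
  show ?thesis unfolding bdd_below_def
    using amb_int_bound[OF _ C assms] by (auto intro!: exI[of _ "-C"] simp: abs_le_iff) (metis minus_le_iff)
qed

lemma wst_le: "Q \<in> amb \<Longrightarrow> bm g \<Longrightarrow> wst g \<le> (\<integral>y. g y \<partial>Q)"
  unfolding worst_def by (rule cINF_lower[OF bdd_wst])

lemma wst_ge: "(\<And>Q. Q \<in> amb \<Longrightarrow> c \<le> (\<integral>y. g y \<partial>Q)) \<Longrightarrow> c \<le> wst g"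
  unfolding worst_def by (rule cINF_greatest[OF amb_ne])

lemma wst_cong: "(\<And>y. y \<in> {lo..hi} \<Longrightarrow> g y = f y) \<Longrightarrow> wst g = wst f"
  unfolding worst_def by (intro INF_cong refl amb_int_cong) auto

lemma amb_int_affine: assumes "Q \<in> amb" "bm g"
  shows "(\<integral>y. a + b * g y \<partial>Q) = a + b * (\<integral>y. g y \<partial>Q)"
proof -
  interpret prob_space Q using assms amb_iff by auto
  show ?thesis using amb_int[OF assms] by (simp add: prob_space)
qed

lemma wst_affine: assumes "bm g" "0 \<le> b"
  shows "wst (\<lambda>y. a + b * g y) = a + b * wst g"
proof (rule antisym)
  have bm2: "bm (\<lambda>y. a + b * g y)" using assms bm_intros by auto
  show "a + b * wst g \<le> wst (\<lambda>y. a + b * g y)"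
  proof (rule wst_ge)
    fix Q assume Q: "Q \<in> amb"
    have "b * wst g \<le> b * (\<integral>y. g y \<partial>Q)" using wst_le[OF Q assms(1)] assms(2) by (rule mult_left_mono)
    then show "a + b * wst g \<le> (\<integral>y. a + b * g y \<partial>Q)" using amb_int_affine[OF Q assms(1)] by simp
  qed
  show "wst (\<lambda>y. a + b * g y) \<le> a + b * wst g"
  proof (cases "b = 0")
    case True
    then show ?thesis using wst_le[OF P_amb bm2] prob_space.prob_space[OF prob_P] by simp
  next
    case False
    then have bpos: "0 < b" using assms by simp
    have "(wst (\<lambda>y. a + b * g y) - a) / b \<le> wst g"
    proof (rule wst_ge)
      fix Q assume Q: "Q \<in> amb"
      have "wst (\<lambda>y. a + b * g y) \<le> a + b * (\<integral>y. g y \<partial>Q)"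
        using wst_le[OF Q bm2] amb_int_affine[OF Q assms(1)] by simp
      then show "(wst (\<lambda>y. a + b * g y) - a) / b \<le> (\<integral>y. g y \<partial>Q)"
        using bpos by (simp add: divide_le_eq mult.commute)
    qed
    then show ?thesis using bpos by (simp add: divide_le_eq mult.commute)
  qed
qed

end


context pset begin

abbreviation "Xm \<equiv> Xmin lo hi D P \<eta> x"
abbreviation "Ui i t \<equiv> integral {lo..t} (Xm i)"
abbreviation "tw \<equiv> tstar_w lo hi D P \<eta> x"

lemma Xm_def': "Xm i t = wst (x i t)"
  by (simp add: Xmin_def)

lemma Xbar_int: "Xbar P x i t = (\<integral>y. x i t y \<partial>P)" by (simp add: Xbar_def)

lemma Xm_bounds: assumes "i \<in> {1,2}" "t \<in> {lo..hi}"
  shows "0 \<le> Xm i t" "Xm i t \<le> Xbar P x i t" "Xbar P x i t \<le> 1" "Xm i t \<le> 1"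
proof -
  show "0 \<le> Xm i t" unfolding Xm_def'
  proof (rule wst_ge)
    fix Q assume "Q \<in> amb"
    then show "0 \<le> (\<integral>y. x i t y \<partial>Q)"
      by (intro Bochner_Integration.integral_nonneg) (use x_bounds[OF assms] amb_iff in auto)
  qed
  show a: "Xm i t \<le> Xbar P x i t" unfolding Xm_def' Xbar_int
    using wst_le[OF P_amb x_bm[OF assms]] by simp
  have "(\<integral>y. x i t y \<partial>P) \<le> (\<integral>y. 1 \<partial>P)"
    by (rule amb_int_le[OF P_amb x_bm[OF assms]]) (use x_bounds[OF assms] bm_intros in auto)
  then show b: "Xbar P x i t \<le> 1" unfolding Xbar_int using prob_space.prob_space[OF prob_P] by simp
  show "Xm i t \<le> 1" using a b by simp
qed

lemma Xm_mono: "i \<in> {1,2} \<Longrightarrow> mono_on {lo..hi} (Xm i)"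
  using AX by (cases "i = 1") (auto simp add: assumption_X_def Theta_def)

lemma Xm_meas[measurable]: "i \<in> {1,2} \<Longrightarrow> Xm i \<in> borel_measurable M"
  using Xm_mono borel_measurable_mono_on_fnc by blast

lemma Xm_integrable: assumes "i \<in> {1,2}" "lo \<le> a" "b \<le> hi" shows "Xm i integrable_on {a..b}"
  using integrable_on_mono_on mono_on_subset[OF Xm_mono[OF assms(1)]] assms by auto

lemma Ui_bounds: assumes "i \<in> {1,2}" "t \<in> {lo..hi}" shows "0 \<le> Ui i t" "Ui i t \<le> t - lo"
proof -
  show "0 \<le> Ui i t"
    by (rule integral_nonneg) (use Xm_integrable[OF assms(1)] Xm_bounds[OF assms(1)] assms in auto)
  have "Ui i t \<le> integral {lo..t} (\<lambda>_. 1::real)"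
    by (rule integral_le) (use Xm_integrable[OF assms(1)] Xm_bounds[OF assms(1)] assms in auto)
  then show "Ui i t \<le> t - lo" using assms by simp
qed

lemma Ui_mono: assumes "i \<in> {1,2}" shows "mono_on {lo..hi} (Ui i)"
proof (rule mono_onI)
  fix r s assume rs: "r \<in> {lo..hi}" "s \<in> {lo..hi}" "r \<le> s"
  show "Ui i r \<le> Ui i s"
    by (rule integral_subset_le) (use Xm_integrable[OF assms] Xm_bounds[OF assms] rs in auto)
qed

lemma Ui_meas[measurable]: "i \<in> {1,2} \<Longrightarrow> Ui i \<in> borel_measurable M"
  using Ui_mono borel_measurable_mono_on_fnc by blast

lemma id_meas[measurable]: "(\<lambda>t. t) \<in> borel_measurable M"
  by (simp add: measurable_restrict_space1)

lemma tw_eq: "tw i t = t * Xm i t - Ui i t" by (simp add: tstar_w_def)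

lemma tw_meas[measurable]: "i \<in> {1,2} \<Longrightarrow> tw i \<in> borel_measurable M"
  unfolding tstar_w_def by measurable

lemma tw_bound: assumes "i \<in> {1,2}" "t \<in> {lo..hi}" shows "\<bar>tw i t\<bar> \<le> 2 * hi"
proof -
  have "0 \<le> t * Xm i t" using Xm_bounds[OF assms] assms lo_pos by simp
  moreover have "t * Xm i t \<le> hi * 1"
    by (rule mult_mono) (use Xm_bounds[OF assms] assms lo_pos in auto)
  ultimately show ?thesis using Ui_bounds[OF assms] assms lo_pos unfolding tw_eq abs_le_iff by auto
qed

lemma tstar_eq: "tstar lo hi D P \<eta> x i t s = tw i t"
  unfolding tstar_def tstar_l_def tstar_w_def by (simp add: algebra_simps)

lemma tstar_rule: "transfer_rule lo hi (tstar lo hi D P \<eta> x)"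
  unfolding transfer_rule_def bounded_measurable_rule_def tstar_eq Theta_def
proof (intro ballI conjI)
  fix i :: nat assume i: "i \<in> {1,2}"
  show "(\<lambda>z. tw i (fst z)) \<in> borel_measurable (M \<Otimes>\<^sub>M M)"
    using tw_meas[OF i] by measurable
  show "\<exists>C. \<forall>\<theta>\<in>{lo..hi}. \<forall>\<theta>'\<in>{lo..hi}. \<bar>tw i \<theta>\<bar> \<le> C"
    using tw_bound[OF i] by blast
qed

lemma Umin_tstar: assumes "i \<in> {1,2}" "t \<in> {lo..hi}"
  shows "Umin lo hi D P \<eta> x (tstar lo hi D P \<eta> x) i t = Ui i t"
proof -
  have "Umin lo hi D P \<eta> x (tstar lo hi D P \<eta> x) i t = wst (\<lambda>y. (- tw i t) + t * x i t y)"
    unfolding Umin_def tstar_eq by (simp add: algebra_simps)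
  also have "\<dots> = - tw i t + t * Xm i t"
    using wst_affine[OF x_bm[OF assms], of t "- tw i t"] assms lo_pos by (simp add: Xm_def')
  finally show ?thesis by (simp add: tw_eq)
qed

lemma Tbar_tstar: "Tbar P (tstar lo hi D P \<eta> x) i t = tw i t"
  unfolding Tbar_def tstar_eq using prob_space.prob_space[OF prob_P] by simp

lemma wld_Umin: assumes "i \<in> {1,2}" "t \<in> {lo..hi}" "transfer_rule lo hi tt"
  and eq: "\<And>s. s \<in> {lo..hi} \<Longrightarrow> tt i t s = a * x i t s + b * (1 - x i t s)" and ab: "t - a \<ge> - b"
  shows "Umin lo hi D P \<eta> x tt i t = - b + (t - a + b) * Xm i t"
    and "Tbar P tt i t = b + (a - b) * Xbar P x i t"
proof -
  have "Umin lo hi D P \<eta> x tt i t = wst (\<lambda>y. (- b) + (t - a + b) * x i t y)"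
    unfolding Umin_def by (rule wst_cong) (simp add: eq algebra_simps)
  also have "\<dots> = - b + (t - a + b) * Xm i t"
    using wst_affine[OF x_bm[OF assms(1,2)], of "t - a + b" "- b"] ab by (simp add: Xm_def')
  finally show "Umin lo hi D P \<eta> x tt i t = - b + (t - a + b) * Xm i t" .
  have "Tbar P tt i t = (\<integral>y. b + (a - b) * x i t y \<partial>P)"
    unfolding Tbar_def by (rule amb_int_cong[OF P_amb]) (simp add: eq algebra_simps)
  also have "\<dots> = b + (a - b) * Xbar P x i t"
    using amb_int_affine[OF P_amb x_bm[OF assms(1,2)]] by (simp add: Xbar_int)
  finally show "Tbar P tt i t = b + (a - b) * Xbar P x i t" .
qed

lemma Tbar_meas: assumes "transfer_rule lo hi tt" "i \<in> {1,2}"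
  shows "Tbar P tt i \<in> borel_measurable P" "integrable P (Tbar P tt i)"
proof -
  interpret prob_space P by (rule prob_P)
  have m: "(\<lambda>z. tt i (fst z) (snd z)) \<in> borel_measurable (M \<Otimes>\<^sub>M M)"
    and C: "\<exists>C. \<forall>\<theta>\<in>{lo..hi}. \<forall>\<theta>'\<in>{lo..hi}. \<bar>tt i \<theta> \<theta>'\<bar> \<le> C"
    using assms by (auto simp: transfer_rule_def bounded_measurable_rule_def Theta_def)
  have "sets (P \<Otimes>\<^sub>M P) = sets (M \<Otimes>\<^sub>M M)" by (intro sets_pair_measure_cong sets_P)
  then have "borel_measurable (P \<Otimes>\<^sub>M P) = borel_measurable (M \<Otimes>\<^sub>M M)"
    by (intro measurable_cong_sets) auto
  then have m2: "case_prod (tt i) \<in> borel_measurable (P \<Otimes>\<^sub>M P)"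
    using m unfolding case_prod_beta' by (metis (no_types))
  show m3: "Tbar P tt i \<in> borel_measurable P"
    unfolding Tbar_def using borel_measurable_lebesgue_integral[OF m2] by simp
  obtain C where C: "\<forall>\<theta>\<in>{lo..hi}. \<forall>\<theta>'\<in>{lo..hi}. \<bar>tt i \<theta> \<theta>'\<bar> \<le> C" using C by blast
  have "\<bar>Tbar P tt i t\<bar> \<le> C" if "t \<in> {lo..hi}" for t
    unfolding Tbar_def
    by (rule amb_int_bound[OF P_amb]) (use C that rule_bm[OF assms(1)[unfolded transfer_rule_def] assms(2)] in auto)
  then show "integrable P (Tbar P tt i)"
    by (intro integrable_const_bound[where B=C] m3) (auto simp: space_P)
qed

end


lemma nn_h:
  fixes N :: "real measure"
  assumes "W \<in> sets N" "L \<in> sets N" "A \<in> sets N" "0 \<le> a" "0 \<le> b"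
  shows "(\<integral>\<^sup>+y. ennreal (a * indicator W y + b * indicator L y) * indicator A y \<partial>N)
     = ennreal a * emeasure N (W \<inter> A) + ennreal b * emeasure N (L \<inter> A)"
proof -
  have "(\<integral>\<^sup>+y. ennreal (a * indicator W y + b * indicator L y) * indicator A y \<partial>N)
     = (\<integral>\<^sup>+y. ennreal a * indicator (W \<inter> A) y + ennreal b * indicator (L \<inter> A) y \<partial>N)"
    using assms by (intro nn_integral_cong) (auto split: split_indicator simp: ennreal_plus)
  also have "\<dots> = ennreal a * emeasure N (W \<inter> A) + ennreal b * emeasure N (L \<inter> A)"
    using assms by (simp add: nn_integral_add nn_integral_cmult_indicator sets.Int)
  finally show ?thesis .
qed

context pset begin

lemma meas_P: "f \<in> borel_measurable M \<Longrightarrow> f \<in> borel_measurable P"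
  using measurable_cong_sets[OF sets_P refl, of borel] by blast

lemma D4: "Q \<in> Delta lo hi (BTheta lo hi) \<Longrightarrow> sub_sigma lo hi E \<Longrightarrow> E \<subseteq> BTheta lo hi
   \<Longrightarrow> D (restr Q E) (restr P E) \<le> D Q P"
  using AD sub_B PD unfolding assumption_D_def by blast

lemma D5: "Q \<in> Delta lo hi (BTheta lo hi) \<Longrightarrow> sub_sigma lo hi E \<Longrightarrow> E \<subseteq> BTheta lo hi
   \<Longrightarrow> absolutely_continuous P Q \<Longrightarrow> (AE \<theta> in P. RN_deriv (restr P E) (restr Q E) \<theta> = RN_deriv P Q \<theta>)
   \<Longrightarrow> D (restr Q E) (restr P E) = D Q P"
  using AD sub_B PD unfolding assumption_D_def by blast

lemma D2: "Q \<in> Delta lo hi (BTheta lo hi) \<Longrightarrow>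
    (\<exists>f C. f \<in> borel_measurable P \<and> (\<forall>\<theta>\<in>space P. f \<theta> \<le> ennreal C) \<and> Q = density P f)
   \<Longrightarrow> continuous_on {0..1} (\<lambda>e. D (mix e Q P) P)"
  using AD sub_B PD unfolding assumption_D_def by blast

lemma coarsen:
  assumes W: "W \<in> sets M" and pW: "0 < measure P W" "measure P W < 1" and Q: "Q \<in> amb"
  defines "h \<equiv> \<lambda>y. measure Q W / measure P W * indicator W y
          + (1 - measure Q W) / (1 - measure P W) * indicator ({lo..hi} - W) y"
  shows "density P (\<lambda>y. ennreal (h y)) \<in> amb"
    and "\<And>g. bm g \<Longrightarrow> (\<integral>y. g y \<partial>density P (\<lambda>y. ennreal (h y))) = (\<integral>y. h y * g y \<partial>P)"
    and "h \<in> borel_measurable M" and "\<And>y. 0 \<le> h y"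
proof -
  interpret P: prob_space P by (rule prob_P)
  interpret Q: prob_space Q using Q amb_iff by auto
  define a where "a = measure Q W / measure P W"
  define b where "b = (1 - measure Q W) / (1 - measure P W)"
  define L where "L = {lo..hi} - W"
  define Q' where "Q' = density P (\<lambda>y. ennreal (h y))"
  have h_eq: "h = (\<lambda>y. a * indicator W y + b * indicator L y)" by (simp add: h_def a_def b_def L_def)
  have qW: "0 \<le> measure Q W" "measure Q W \<le> 1" by auto
  have a0: "0 \<le> a" and b0: "0 \<le> b" using qW pW by (auto simp: a_def b_def)
  show h0: "\<And>y. 0 \<le> h y" using a0 b0 by (simp add: h_eq)
  have Wsub: "W \<subseteq> {lo..hi}" using sets.sets_into_space[OF W] space_M by simp
  have L: "L \<in> sets M" unfolding L_def using W space_M sets.compl_sets[of W M] by simp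
  have Th: "{lo..hi} \<in> sets M" using sets.top[of M] space_M by simp
  have WP: "W \<in> sets P" "L \<in> sets P" "{lo..hi} \<in> sets P" using W L Th sets_P by auto
  have WQ: "W \<in> sets Q" "L \<in> sets Q" using W L Q amb_iff by auto
  show hM: "h \<in> borel_measurable M" unfolding h_eq using W L by measurable
  have hmr: "h \<in> borel_measurable P" using hM by (rule meas_P)
  have hm: "(\<lambda>y. ennreal (h y)) \<in> borel_measurable P"
    using measurable_compose[OF hmr measurable_ennreal] by (simp add: comp_def)
  have emQ': "emeasure Q' A = ennreal a * emeasure P (W \<inter> A) + ennreal b * emeasure P (L \<inter> A)"
    if "A \<in> sets P" for A
    unfolding Q'_def using emeasure_density[OF hm that] nn_h[OF WP(1,2) that a0 b0] by (simp add: h_eq)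
  have PW: "emeasure P W = ennreal (measure P W)" by (simp add: P.emeasure_eq_measure)
  have PL: "emeasure P L = ennreal (1 - measure P W)"
    using P.prob_compl[OF WP(1)] space_P by (simp add: P.emeasure_eq_measure L_def)
  have QL: "emeasure Q L = ennreal (1 - measure Q W)"
    using Q.prob_compl[OF WQ(1)] Q amb_iff by (simp add: Q.emeasure_eq_measure L_def)
  have WL: "W \<inter> L = {}" "L \<inter> W = {}" by (auto simp: L_def)
  have aW: "ennreal a * emeasure P W = emeasure Q W"
    using pW qW by (simp add: PW a_def Q.emeasure_eq_measure ennreal_mult''[symmetric])
  have bL: "ennreal b * emeasure P L = emeasure Q L"
    using pW qW by (simp add: PL QL b_def ennreal_mult''[symmetric])
  have Q'W: "emeasure Q' W = emeasure Q W" using emQ'[OF WP(1)] WL aW by simp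
  have Q'L: "emeasure Q' L = emeasure Q L" using emQ'[OF WP(2)] WL bL by (simp add: Int_absorb)
  have WLT: "W \<inter> {lo..hi} = W" "L \<inter> {lo..hi} = L" using Wsub by (auto simp: L_def)
  have QT: "emeasure Q {lo..hi} = 1" using Q.emeasure_space_1 Q amb_iff by simp
  have QWL: "emeasure Q W + emeasure Q L = 1"
    using plus_emeasure[OF WQ(1) WQ(2) WL(1)] QT Wsub by (simp add: L_def Un_absorb1)
  have Q'T: "emeasure Q' {lo..hi} = 1" using emQ'[OF WP(3)] WLT aW bL QWL by simp
  have spQ': "space Q' = {lo..hi}" and setsQ': "sets Q' = sets M" using space_P sets_P by (auto simp: Q'_def)
  have probQ': "prob_space Q'" by (rule prob_spaceI) (simp add: spQ' Q'T)
  have DeltaQ': "Q' \<in> Delta lo hi (BTheta lo hi)" using probQ' spQ' setsQ' by (simp add: Delta_iff)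
  have DeltaQ: "Q \<in> Delta lo hi (BTheta lo hi)" using Q by (simp add: ambiguity_set_def)
  define E where "E = {{}, W, {lo..hi} - W, {lo..hi}}"
  have sa: "sigma_algebra {lo..hi} E" unfolding E_def by (rule sigma_algebra_single_set[OF Wsub])
  have EM: "E \<subseteq> sets M" using W L Th by (auto simp: E_def L_def)
  have subE: "sub_sigma lo hi E" using sa EM by (simp add: sub_sigma_def Theta_def BT)
  have EPow: "E \<subseteq> Pow {lo..hi}" using Wsub by (auto simp: E_def)
  define F where "F = sigma {lo..hi} E"
  have sF: "sets F = E" unfolding F_def using sets_measure_of[OF EPow] sigma_algebra.sigma_sets_eq[OF sa] by simp
  have spF: "space F = {lo..hi}" unfolding F_def using space_measure_of[OF EPow] by simp
  have subP: "subalgebra P F" and subQ: "subalgebra Q F" and subQ': "subalgebra Q' F"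
    using sF spF EM space_P sets_P Q amb_iff spQ' setsQ' by (auto simp: subalgebra_def)
  have rP: "restr P E = restr_to_subalg P F" and rQ': "restr Q' E = restr_to_subalg Q' F"
    by (simp_all add: restr_def restr_to_subalg_def sF)
  have rQQ': "restr Q' E = restr Q E"
    unfolding restr_def spQ' using Q amb_iff
  proof (simp, intro measure_of_eq[OF EPow])
    fix A assume "A \<in> sigma_sets {lo..hi} E"
    then have "A \<in> E" using sigma_algebra.sigma_sets_eq[OF sa] by simp
    then show "emeasure Q' A = emeasure Q A"
      using Q'W Q'L Q'T QT by (auto simp: E_def L_def emeasure_density Q'_def)
  qed
  have D4Q: "D (restr Q E) (restr P E) \<le> D Q P" by (rule D4[OF DeltaQ subE]) (use EM BT in simp)
  have acQ': "absolutely_continuous P Q'" unfolding Q'_def by (rule absolutely_continuousI_density[OF hm])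
  have AEeq: "AE y in P. RN_deriv (restr P E) (restr Q' E) y = RN_deriv P Q' y"
  proof -
    define PE where "PE = restr_to_subalg P F"
    interpret PE: finite_measure PE unfolding PE_def
      by (rule finite_measure_restr_to_subalg[OF subP]) (simp add: P.finite_measure_axioms)
    have sPE: "sets PE = E" unfolding PE_def using sets_restr_to_subalg[OF subP] sF by simp
    have WPE: "W \<in> sets PE" "L \<in> sets PE" using sPE by (auto simp: E_def L_def)
    have hE: "(\<lambda>y. ennreal (h y)) \<in> borel_measurable PE" unfolding h_eq using WPE by measurable
    have densE: "density PE (\<lambda>y. ennreal (h y)) = restr_to_subalg Q' F"
    proof (rule measure_eqI)
      show "sets (density PE (\<lambda>y. ennreal (h y))) = sets (restr_to_subalg Q' F)"
        using sets_restr_to_subalg[OF subQ'] sPE sF by simp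
      fix A assume "A \<in> sets (density PE (\<lambda>y. ennreal (h y)))"
      then have A: "A \<in> sets PE" by simp
      then have AE': "A \<in> E" "A \<in> sets P" using sPE EM sets_P by auto
      have WA: "W \<inter> A \<in> sets F" "L \<inter> A \<in> sets F" using WPE A sPE sF by auto
      have "emeasure (density PE (\<lambda>y. ennreal (h y))) A
          = ennreal a * emeasure PE (W \<inter> A) + ennreal b * emeasure PE (L \<inter> A)"
        using emeasure_density[OF hE A] nn_h[OF WPE A a0 b0] by (simp add: h_eq)
      also have "\<dots> = ennreal a * emeasure P (W \<inter> A) + ennreal b * emeasure P (L \<inter> A)"
        unfolding PE_def using emeasure_restr_to_subalg[OF subP] WA by simp
      also have "\<dots> = emeasure Q' A" using emQ'[OF AE'(2)] by simp
      also have "\<dots> = emeasure (restr_to_subalg Q' F) A"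
        using emeasure_restr_to_subalg[OF subQ'] AE'(1) sF by simp
      finally show "emeasure (density PE (\<lambda>y. ennreal (h y))) A = emeasure (restr_to_subalg Q' F) A" .
    qed
    have "AE y in PE. ennreal (h y) = RN_deriv PE (restr_to_subalg Q' F) y"
      by (rule PE.RN_deriv_unique[OF hE densE])
    then have 1: "AE y in P. ennreal (h y) = RN_deriv (restr P E) (restr Q' E) y"
      using AE_restr_to_subalg[OF subP] unfolding PE_def rP rQ' by blast
    have 2: "AE y in P. ennreal (h y) = RN_deriv P Q' y"
      unfolding Q'_def by (rule P.RN_deriv_unique[OF hm refl])
    show ?thesis using 1 2 by eventually_elim simp
  qed
  have "D Q' P = D (restr Q' E) (restr P E)"
    by (rule D5[OF DeltaQ' subE _ acQ' AEeq, symmetric]) (use EM BT in simp)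
  also have "\<dots> \<le> D Q P" using D4Q rQQ' by simp
  also have "\<dots> \<le> ennreal \<eta>" using Q by (simp add: ambiguity_set_def)
  finally show "density P (\<lambda>y. ennreal (h y)) \<in> amb"
    using DeltaQ' unfolding Q'_def by (simp add: ambiguity_set_def)
  fix g assume g: "bm g"
  have gm: "g \<in> borel_measurable P" using g bm_def meas_P by auto
  show "(\<integral>y. g y \<partial>density P (\<lambda>y. ennreal (h y))) = (\<integral>y. h y * g y \<partial>P)"
    using integral_density[OF gm hmr] h0 by simp
qed

end


context pset begin

definition Wset :: "nat \<Rightarrow> real \<Rightarrow> real set" where
  "Wset i t = {y \<in> {lo..hi}. x i t y = 1}"

lemma bm_mult: "bm f \<Longrightarrow> bm g \<Longrightarrow> bm (\<lambda>y. f y * g y)"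
proof -
  assume f: "bm f" and g: "bm g"
  obtain C1 C2 where C: "\<forall>y\<in>{lo..hi}. \<bar>f y\<bar> \<le> C1" "\<forall>y\<in>{lo..hi}. \<bar>g y\<bar> \<le> C2"
    using f g bm_def by auto
  have "\<bar>f y * g y\<bar> \<le> C1 * C2" if "y \<in> {lo..hi}" for y
    unfolding abs_mult by (rule mult_mono) (use C that in auto)
  moreover have "(\<lambda>y. f y * g y) \<in> borel_measurable M" using f g bm_def by auto
  ultimately show ?thesis unfolding bm_def by blast
qed

lemma bm_ind: "A \<in> sets M \<Longrightarrow> bm (indicator A)"
  unfolding bm_def by (auto intro!: exI[of _ 1] simp: indicator_def)

lemma W_sets: assumes "i \<in> {1,2}" "t \<in> {lo..hi}" shows "Wset i t \<in> sets M"
proof -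
  have [measurable]: "x i t \<in> borel_measurable M" using x_bm[OF assms] bm_def by auto
  have "{y \<in> space M. x i t y = 1} \<in> sets M" by measurable
  then show ?thesis by (simp add: Wset_def space_M)
qed

lemma x01: assumes "i \<in> {1,2}" "t \<in> {lo..hi}" "y \<in> {lo..hi}" "y \<noteq> t"
  shows "x i t y = 0 \<or> x i t y = 1"
  using AX assms by (cases "i = 1") (auto simp add: assumption_X_def Theta_def)

lemma AE_neq: assumes "Q \<in> amb" "t \<in> {lo..hi}" shows "AE y in Q. y \<noteq> t"
proof (rule AE_I')
  show "{t} \<in> null_sets Q" using Q_single[OF assms] assms amb_iff
    by (auto intro!: null_setsI simp: sets_restrict_space_iff space_M)
qed auto

lemma W_AE: assumes "Q \<in> amb" "i \<in> {1,2}" "t \<in> {lo..hi}"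
  shows "AE y in Q. x i t y = indicator (Wset i t) y"
  using AE_neq[OF assms(1,3)] AE_space
proof eventually_elim
  case (elim y)
  then have y: "y \<in> {lo..hi}" using assms(1) amb_iff by auto
  show ?case using x01[OF assms(2,3) y elim(1)] y by (auto simp: Wset_def)
qed

lemma W_int: assumes "Q \<in> amb" "i \<in> {1,2}" "t \<in> {lo..hi}"
  shows "(\<integral>y. x i t y \<partial>Q) = measure Q (Wset i t)"
proof -
  have "(\<integral>y. x i t y \<partial>Q) = (\<integral>y. indicator (Wset i t) y \<partial>Q)"
    by (rule integral_cong_AE[OF amb_meas[OF assms(1) x_bm[OF assms(2,3)]]
          amb_meas[OF assms(1) bm_ind[OF W_sets[OF assms(2,3)]]] W_AE[OF assms]])
  also have "\<dots> = measure Q (Wset i t)"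
  proof -
    have "Wset i t \<inter> {lo..hi} = Wset i t" by (auto simp: Wset_def)
    then show ?thesis using assms(1) amb_iff by simp
  qed
  finally show ?thesis .
qed

lemma Xbar_W: "i \<in> {1,2} \<Longrightarrow> t \<in> {lo..hi} \<Longrightarrow> Xbar P x i t = measure P (Wset i t)"
  using W_int[OF P_amb] by (simp add: Xbar_int)

lemma int_P_add: "bm f \<Longrightarrow> bm g \<Longrightarrow> (\<integral>y. f y + g y \<partial>P) = (\<integral>y. f y \<partial>P) + (\<integral>y. g y \<partial>P)"
  using amb_int[OF P_amb] by (simp add: Bochner_Integration.integral_add)

lemma int_P_diff: "bm f \<Longrightarrow> bm g \<Longrightarrow> (\<integral>y. f y - g y \<partial>P) = (\<integral>y. f y \<partial>P) - (\<integral>y. g y \<partial>P)"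
  using amb_int[OF P_amb] by (simp add: Bochner_Integration.integral_diff)


end


context pset begin

lemma core:
  assumes i: "i \<in> {1,2}" and t: "t \<in> {lo..hi}" "t < hi"
    and tr: "transfer_rule lo hi tt" and wf: "winner_favored lo hi x tt"
  shows "Umin lo hi D P \<eta> x tt i t \<le> t * Xm i t - Tbar P tt i t"
proof -
  interpret P: prob_space P by (rule prob_P)
  define W where "W = Wset i t"
  define L where "L = {lo..hi} - W"
  define s where "s = tt i t"
  define g where "g = (\<lambda>y. t * x i t y - s y)"
  define pW where "pW = measure P W"
  define T where "T = (\<integral>y. s y \<partial>P)"
  have tpos: "0 < t" using t lo_pos by simp
  have sbm: "bm s" unfolding s_def using rule_bm[OF tr[unfolded transfer_rule_def] i t(1)] .
  have xbm: "bm (x i t)" by (rule x_bm[OF i t(1)])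
  have gbm: "bm g" unfolding g_def using sbm xbm bm_intros by auto
  have WM: "W \<in> sets M" unfolding W_def by (rule W_sets[OF i t(1)])
  have WP: "W \<in> sets P" using WM sets_P by simp
  have Wsub: "W \<subseteq> {lo..hi}" by (auto simp: W_def Wset_def)
  have U: "Umin lo hi D P \<eta> x tt i t = wst g" by (simp add: Umin_def g_def s_def)
  have Tb: "Tbar P tt i t = T" by (simp add: Tbar_def T_def s_def)
  have X: "Xbar P x i t = pW" unfolding pW_def W_def by (rule Xbar_W[OF i t(1)])
  have intx: "(\<integral>y. x i t y \<partial>P) = pW" using X by (simp add: Xbar_int)
  have Ug: "wst g \<le> t * pW - T"
  proof -
    have "wst g \<le> (\<integral>y. g y \<partial>P)" by (rule wst_le[OF P_amb gbm])
    also have "\<dots> = t * pW - T" unfolding g_def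
      using int_P_diff[OF bm_intros(3)[OF xbm] sbm] intx by (simp add: T_def)
    finally show ?thesis .
  qed
  obtain C where C: "\<forall>y\<in>{lo..hi}. \<bar>s y\<bar> \<le> C" using sbm bm_def by auto
  have pW01: "0 \<le> pW" "pW \<le> 1" by (auto simp: pW_def)
  have Xm0: "0 \<le> Xm i t" using Xm_bounds[OF i t(1)] by simp
  consider "pW = 0" | "pW = 1" | "0 < pW \<and> pW < 1" using pW01 by linarith
  then show ?thesis
  proof cases
    case 1
    have "0 \<le> t * Xm i t" using Xm0 tpos by simp
    then show ?thesis using Ug 1 U Tb by simp
  next
    case 2
    then have "Xbar P x i t = 1" using X by simp
    then have "t = hi" using AX i t(1) by (cases "i = 1") (auto simp: assumption_X_def Theta_def)
    then show ?thesis using t(2) by simp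
  next
    case 3
    have pL: "measure P L = 1 - pW"
      using P.prob_compl[OF WP] space_P by (simp add: L_def pW_def)
    have Lne: "L - {t} \<noteq> {}"
    proof
      assume "L - {t} = {}"
      then have "L \<subseteq> {t}" by auto
      moreover have "L \<in> sets P" using WP space_P sets.compl_sets[OF WP] by (simp add: L_def)
      moreover have "{t} \<in> sets P" using t(1) by (simp add: sets_P sets_restrict_space_iff space_M)
      ultimately have "measure P L \<le> measure P {t}" by (intro P.finite_measure_mono)
      also have "\<dots> = 0" using P_single[OF t(1)] by (simp add: P.emeasure_eq_measure)
      finally show False using pL 3 by simp
    qed
    have Wne: "W \<noteq> {}" using 3 by (auto simp: pW_def)
    define c where "c = Inf (s ` (L - {t}))"
    have bddL: "bdd_below (s ` (L - {t}))"
      using C unfolding bdd_below_def by (auto simp: L_def abs_le_iff intro!: exI[of _ "-C"])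
    have sL: "c \<le> s l" if "l \<in> L - {t}" for l
      unfolding c_def using bddL that by (simp add: cInf_lower)
    have sW: "s w \<le> c" if w: "w \<in> W" for w
      unfolding c_def
    proof (rule cInf_greatest)
      show "s ` (L - {t}) \<noteq> {}" using Lne by simp
      fix v assume "v \<in> s ` (L - {t})"
      then obtain l where l: "l \<in> L - {t}" "v = s l" by auto
      have l0: "x i t l = 0" using x01[OF i t(1), of l] l by (auto simp: L_def W_def Wset_def)
      have w1: "x i t w = 1" "w \<in> {lo..hi}" using w by (auto simp: W_def Wset_def)
      have "\<forall>i\<in>{1,2}. \<forall>\<theta>\<in>{lo..hi}. \<forall>\<theta>w\<in>{lo..hi}. \<forall>\<theta>l\<in>{lo..hi}.
         \<theta> < hi \<longrightarrow> x i \<theta> \<theta>w = 1 \<longrightarrow> x i \<theta> \<theta>l = 0 \<longrightarrow> tt i \<theta> \<theta>w \<le> tt i \<theta> \<theta>l"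
        using wf by (simp add: winner_favored_def Theta_def)
      then show "s w \<le> v" using i t w1 l l0 by (auto simp: s_def L_def)
    qed
    have "(wst g + T) / t \<le> Xm i t"
      unfolding Xm_def'
    proof (rule wst_ge)
      fix Q assume Q: "Q \<in> amb"
      interpret Q: prob_space Q using Q amb_iff by auto
      define qW where "qW = measure Q W"
      have intQ: "(\<integral>y. x i t y \<partial>Q) = qW" unfolding qW_def W_def by (rule W_int[OF Q i t(1)])
      have "wst g + T \<le> t * qW"
      proof (cases "pW \<le> qW")
        case True
        then have "t * pW \<le> t * qW" using tpos by simp
        then show ?thesis using Ug by simp
      next
        case False
        then have qp: "qW < pW" by simp
        have qW01: "0 \<le> qW" "qW \<le> 1" by (auto simp: qW_def)
        define a where "a = qW / pW"
        define b where "b = (1 - qW) / (1 - pW)"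
        define h where "h = (\<lambda>y. a * indicator W y + b * indicator ({lo..hi} - W) y)"
        have co: "density P (\<lambda>y. ennreal (h y)) \<in> amb"
            "\<And>g. bm g \<Longrightarrow> (\<integral>y. g y \<partial>density P (\<lambda>y. ennreal (h y))) = (\<integral>y. h y * g y \<partial>P)"
          and hM: "h \<in> borel_measurable M"
          using coarsen[OF WM, of Q] 3 Q unfolding h_def a_def b_def pW_def qW_def by auto
        have a1: "a \<le> 1" "0 \<le> a" using qp qW01 3 by (auto simp: a_def)
        have b1: "1 \<le> b" using qp qW01 3 by (auto simp: b_def)
        have apW: "a * pW = qW" using 3 by (simp add: a_def)
        have bpL: "b * (1 - pW) = 1 - qW" using 3 by (simp add: b_def)
        have hbm: "bm h" unfolding h_def
          using bm_intros bm_ind[OF WM] bm_ind[OF sets.Diff[OF sets.top WM]] space_M by auto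
        have wq: "wst g \<le> (\<integral>y. h y * g y \<partial>P)"
          using wst_le[OF co(1) gbm] co(2)[OF gbm] by simp
        have lhs: "(\<integral>y. h y * g y \<partial>P) + T = (\<integral>y. h y * g y + s y \<partial>P)"
          unfolding T_def using int_P_add[OF bm_mult[OF hbm gbm] sbm] by simp
        define r where "r = (\<lambda>y. (c - c * b) + (t * a - c * a + c * b) * indicator W y)"
        have rbm: "bm r" unfolding r_def using bm_intros bm_ind[OF WM] by auto
        have le: "(\<integral>y. h y * g y + s y \<partial>P) \<le> (\<integral>y. r y \<partial>P)"
        proof (rule integral_mono_AE)
          show "integrable P (\<lambda>y. h y * g y + s y)"
            using amb_int[OF P_amb] bm_intros bm_mult hbm gbm sbm by auto
          show "integrable P r" using amb_int[OF P_amb rbm] .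
          show "AE y in P. h y * g y + s y \<le> r y"
            using AE_neq[OF P_amb t(1)] AE_space
          proof eventually_elim
            case (elim y)
            then have y: "y \<in> {lo..hi}" "y \<noteq> t" using space_P by auto
            show ?case
            proof (cases "y \<in> W")
              case True
              then have "x i t y = 1" by (simp add: W_def Wset_def)
              moreover have "(1 - a) * s y \<le> (1 - a) * c" using sW[OF True] a1 by (intro mult_left_mono) auto
              ultimately show ?thesis using True
                by (simp add: h_def g_def r_def algebra_simps)
            next
              case False
              then have yL: "y \<in> L - {t}" using y by (simp add: L_def)
              then have "x i t y = 0" using x01[OF i t(1) y] False y by (auto simp: W_def Wset_def)
              moreover have "(1 - b) * s y \<le> (1 - b) * c" using sL[OF yL] b1 by (intro mult_left_mono_neg) auto
              ultimately show ?thesis using False y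
                by (simp add: h_def g_def r_def algebra_simps)
            qed
          qed
        qed
        have rint: "(\<integral>y. r y \<partial>P) = (c - c * b) + (t * a - c * a + c * b) * pW"
          unfolding r_def using amb_int_affine[OF P_amb bm_ind[OF WM]] WP Wsub
          by (simp add: pW_def Int_absorb2 space_P)
        have "(c - c * b) + (t * a - c * a + c * b) * pW = t * qW + c * (1 - (a * pW + b * (1 - pW)))"
          unfolding apW[symmetric] by (simp add: algebra_simps)
        also have "\<dots> = t * qW" using apW bpL by simp
        finally have "(\<integral>y. r y \<partial>P) = t * qW" using rint by simp
        then show ?thesis using wq lhs le by linarith
      qed
      then show "(wst g + T) / t \<le> (\<integral>y. x i t y \<partial>Q)"
        using intQ tpos by (simp add: divide_le_eq mult.commute)
    qed
    then have "wst g + T \<le> t * Xm i t" using tpos by (simp add: divide_le_eq mult.commute)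
    then show ?thesis using U Tb by simp
  qed
qed

end


context pset begin

lemma Ulower:
  assumes i: "i \<in> {1,2}" and tr: "transfer_rule lo hi tt" and fe: "feasible lo hi D P \<eta> x tt"
    and t: "t \<in> {lo..hi}"
  shows "Ui i t \<le> Umin lo hi D P \<eta> x tt i t"
proof -
  define F where "F = Umin lo hi D P \<eta> x tt i"
  have IC: "\<And>s r. s \<in> {lo..hi} \<Longrightarrow> r \<in> {lo..hi} \<Longrightarrow>
     wst (\<lambda>y. s * x i r y - tt i r y) \<le> F s"
    using fe i unfolding feasible_def incentive_compatible_def F_def Umin_def Theta_def by blast
  have IR: "0 \<le> F lo" using fe i lo_hi
    unfolding feasible_def individually_rational_def F_def Theta_def by auto
  have "integral {lo..t} (Xm i) \<le> F t - F lo"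
  proof (rule envelope_lower)
    show "lo \<le> t" using t by simp
    show "mono_on {lo..t} (Xm i)" using mono_on_subset[OF Xm_mono[OF i]] t by auto
    show "0 \<le> Xm i y \<and> Xm i y \<le> 1" if "y \<in> {lo..t}" for y using Xm_bounds[OF i, of y] that t by auto
    fix r s assume rs: "lo \<le> r" "r \<le> s" "s \<le> t"
    have r: "r \<in> {lo..hi}" and s: "s \<in> {lo..hi}" using rs t by auto
    have sbm: "bm (tt i r)" using rule_bm[OF tr[unfolded transfer_rule_def] i r] .
    have xbm: "bm (x i r)" using x_bm[OF i r] .
    have g1: "bm (\<lambda>y. r * x i r y - tt i r y)" using sbm xbm bm_intros by auto
    have "F r + (s - r) * Xm i r \<le> wst (\<lambda>y. s * x i r y - tt i r y)"
    proof (rule wst_ge)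
      fix Q assume Q: "Q \<in> amb"
      have "(\<integral>y. s * x i r y - tt i r y \<partial>Q) = (\<integral>y. (r * x i r y - tt i r y) + (s - r) * x i r y \<partial>Q)"
        by (rule amb_int_cong[OF Q]) (simp add: algebra_simps)
      also have "\<dots> = (\<integral>y. r * x i r y - tt i r y \<partial>Q) + (s - r) * (\<integral>y. x i r y \<partial>Q)"
        using amb_int[OF Q g1] amb_int[OF Q xbm] by simp
      finally have eq: "(\<integral>y. s * x i r y - tt i r y \<partial>Q) = (\<integral>y. r * x i r y - tt i r y \<partial>Q) + (s - r) * (\<integral>y. x i r y \<partial>Q)" .
      have 1: "F r \<le> (\<integral>y. r * x i r y - tt i r y \<partial>Q)"
        unfolding F_def Umin_def using wst_le[OF Q g1] .
      have 2: "(s - r) * Xm i r \<le> (s - r) * (\<integral>y. x i r y \<partial>Q)"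
        using wst_le[OF Q xbm] rs by (intro mult_left_mono) (auto simp: Xm_def')
      show "F r + (s - r) * Xm i r \<le> (\<integral>y. s * x i r y - tt i r y \<partial>Q)" using eq 1 2 by simp
    qed
    then show "(s - r) * Xm i r \<le> F s - F r" using IC[OF s r] by simp
  qed
  then show ?thesis using IR by (simp add: F_def)
qed

lemma strict:
  assumes i: "i \<in> {1,2}" and t: "t \<in> {lo..hi}"
    and pW: "0 < measure P (Wset i t)" "measure P (Wset i t) < 1"
  shows "Xm i t < Xbar P x i t"
proof -
  interpret P: prob_space P by (rule prob_P)
  define W where "W = Wset i t"
  define L where "L = {lo..hi} - W"
  define p where "p = measure P W"
  define q where "q = 1 - p"
  have WM: "W \<in> sets M" unfolding W_def by (rule W_sets[OF i t])
  have WP: "W \<in> sets P" using WM sets_P by simp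
  have LP: "L \<in> sets P" using sets.compl_sets[OF WP] space_P by (simp add: L_def)
  have Wsub: "W \<subseteq> {lo..hi}" by (auto simp: W_def Wset_def)
  have pq: "0 < p" "0 < q" using pW by (auto simp: p_def q_def W_def)
  have PW: "emeasure P W = ennreal p" by (simp add: P.emeasure_eq_measure p_def)
  have PL: "emeasure P L = ennreal q"
    using P.prob_compl[OF WP] space_P by (simp add: P.emeasure_eq_measure L_def q_def p_def)
  have WL: "W \<inter> L = {}" "L \<inter> W = {}" by (auto simp: L_def)
  have WLT: "W \<inter> {lo..hi} = W" "L \<inter> {lo..hi} = L" using Wsub by (auto simp: L_def)
  define hq where "hq = (\<lambda>y. 0 * indicator W y + (1 / q) * indicator L y :: real)"
  define he where "he = (\<lambda>e y. (1 - e) * indicator W y + (e / q + (1 - e)) * indicator L y :: real)"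
  define Q0 where "Q0 = density P (\<lambda>y. ennreal (hq y))"
  have hqm: "(\<lambda>y. ennreal (hq y)) \<in> borel_measurable P" unfolding hq_def using WP LP by measurable
  have hem: "(\<lambda>y. ennreal (he e y)) \<in> borel_measurable P" for e unfolding he_def using WP LP by measurable
  have emQ0: "emeasure Q0 A = ennreal (1 / q) * emeasure P (L \<inter> A)" if "A \<in> sets P" for A
    unfolding Q0_def using emeasure_density[OF hqm that] nn_h[OF WP LP that, of 0 "1/q"] pq
    by (simp add: hq_def)
  have emhe: "emeasure (density P (\<lambda>y. ennreal (he e y))) A
       = ennreal (1 - e) * emeasure P (W \<inter> A) + ennreal (e / q + (1 - e)) * emeasure P (L \<inter> A)"
    if "A \<in> sets P" "0 \<le> e" "e \<le> 1" for A e
    using emeasure_density[OF hem[of e] that(1)] nn_h[OF WP LP that(1), of "1 - e" "e / q + (1 - e)"] pq that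
    by (simp add: he_def)
  have Q0T: "emeasure Q0 {lo..hi} = 1"
    using emQ0[of "{lo..hi}"] sets.top[of P] space_P WLT PL pq
    by (simp add: ennreal_mult''[symmetric])
  have DeltaQ0: "Q0 \<in> Delta lo hi (BTheta lo hi)"
    unfolding Delta_iff
  proof (intro conjI)
    show "space Q0 = {lo..hi}" "sets Q0 = sets M" using space_P sets_P by (auto simp: Q0_def)
    then show "prob_space Q0" using Q0T by (intro prob_spaceI) simp
  qed
  have mix_eq: "mix e Q0 P = density P (\<lambda>y. ennreal (he e y))" if e: "0 \<le> e" "e \<le> 1" for e
  proof -
    have "mix e Q0 P = measure_of (space P) (sets P)
        (\<lambda>A. \<integral>\<^sup>+ y. ennreal (he e y) * indicator A y \<partial>P)"
      unfolding mix_def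
    proof (rule measure_of_eq)
      show "sets P \<subseteq> Pow (space P)" by (rule sets.space_closed)
      fix A assume "A \<in> sigma_sets (space P) (sets P)"
      then have A: "A \<in> sets P" by (simp add: sets.sigma_sets_eq)
      have Asub: "A \<subseteq> {lo..hi}" using sets.sets_into_space[OF A] space_P by simp
      have WA: "W \<inter> A \<in> sets P" "L \<inter> A \<in> sets P" using WP LP A by auto
      have Aun: "emeasure P A = emeasure P (W \<inter> A) + emeasure P (L \<inter> A)"
      proof -
        have "A = (W \<inter> A) \<union> (L \<inter> A)" using Asub by (auto simp: L_def)
        then have "emeasure P A = emeasure P ((W \<inter> A) \<union> (L \<inter> A))" by simp
        also have "\<dots> = emeasure P (W \<inter> A) + emeasure P (L \<inter> A)"
          by (rule plus_emeasure[symmetric]) (use WA in \<open>auto simp: L_def\<close>)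
        finally show ?thesis .
      qed
      define u where "u = measure P (W \<inter> A)"
      define v where "v = measure P (L \<inter> A)"
      have uv: "emeasure P (W \<inter> A) = ennreal u" "emeasure P (L \<inter> A) = ennreal v" "0 \<le> u" "0 \<le> v"
        by (simp_all add: P.emeasure_eq_measure u_def v_def)
      have e1: "0 \<le> 1 - e" "0 \<le> e / q + (1 - e)" "0 \<le> 1 / q" using e pq by auto
      have "ennreal e * emeasure Q0 A + ennreal (1 - e) * emeasure P A
          = ennreal e * (ennreal (1 / q) * ennreal v) + ennreal (1 - e) * (ennreal u + ennreal v)"
        by (simp only: emQ0[OF A] Aun uv)
      also have "\<dots> = ennreal (e * (1 / q * v) + (1 - e) * (u + v))"
        using e1 e uv by (simp only: ennreal_mult[symmetric] ennreal_plus[symmetric] mult_nonneg_nonneg add_nonneg_nonneg)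
      also have "\<dots> = ennreal ((1 - e) * u + (e / q + (1 - e)) * v)"
        by (simp add: algebra_simps)
      also have "\<dots> = ennreal (1 - e) * ennreal u + ennreal (e / q + (1 - e)) * ennreal v"
        using e1 e uv by (simp only: ennreal_mult[symmetric] ennreal_plus[symmetric] mult_nonneg_nonneg add_nonneg_nonneg)
      also have "\<dots> = (\<integral>\<^sup>+ y. ennreal (he e y) * indicator A y \<partial>P)"
        using emeasure_density[OF hem[of e] A, symmetric] emhe[OF A e] uv by simp
      finally show "ennreal e * emeasure Q0 A + ennreal (1 - e) * emeasure P A
          = (\<integral>\<^sup>+ y. ennreal (he e y) * indicator A y \<partial>P)" .
    qed
    also have "\<dots> = density P (\<lambda>y. ennreal (he e y))" by (simp add: density_def)
    finally show ?thesis .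
  qed
  have mix0: "mix 0 Q0 P = P"
  proof -
    have "density P (\<lambda>y. ennreal (he 0 y)) = density P (\<lambda>_. 1)"
    proof (rule density_cong[OF hem])
      show "(\<lambda>_. 1::ennreal) \<in> borel_measurable P" by simp
      show "AE y in P. ennreal (he 0 y) = 1"
        using AE_space by eventually_elim (auto simp: he_def L_def space_P split: split_indicator)
    qed
    then show ?thesis using mix_eq[of 0] by (simp add: density_1)
  qed
  have cont: "continuous_on {0..1} (\<lambda>e. D (mix e Q0 P) P)"
  proof (rule D2[OF DeltaQ0])
    show "\<exists>f C. f \<in> borel_measurable P \<and> (\<forall>\<theta>\<in>space P. f \<theta> \<le> ennreal C) \<and> Q0 = density P f"
    proof (intro exI conjI)
      show "(\<lambda>y. ennreal (hq y)) \<in> borel_measurable P" by (rule hqm)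
      show "\<forall>\<theta>\<in>space P. ennreal (hq \<theta>) \<le> ennreal (1 / q)"
        using pq by (auto simp: hq_def split: split_indicator)
      show "Q0 = density P (\<lambda>y. ennreal (hq y))" by (simp add: Q0_def)
    qed
  qed
  then have "((\<lambda>e. D (mix e Q0 P) P) \<longlongrightarrow> D (mix 0 Q0 P) P) (at 0 within {0..1})"
    by (simp add: continuous_on_def)
  then have "((\<lambda>e. D (mix e Q0 P) P) \<longlongrightarrow> 0) (at 0 within {0..1})"
    using mix0 D1 by simp
  then have "eventually (\<lambda>e. D (mix e Q0 P) P < ennreal \<eta>) (at 0 within {0..1})"
    using eta by (intro order_tendstoD(2)) auto
  then obtain d where d: "d > 0" "\<And>e. e \<in> {0..1} \<Longrightarrow> e \<noteq> 0 \<Longrightarrow> dist e 0 < d \<Longrightarrow> D (mix e Q0 P) P < ennreal \<eta>"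
    unfolding eventually_at by blast
  define e where "e = min 1 (d / 2)"
  have e: "0 < e" "e \<le> 1" "e \<in> {0..1}" "e \<noteq> 0" "dist e 0 < d" using d by (auto simp: e_def dist_real_def)
  define Qe where "Qe = density P (\<lambda>y. ennreal (he e y))"
  have DQe: "D Qe P \<le> ennreal \<eta>" using d(2)[OF e(3,4,5)] mix_eq[of e] e by (simp add: Qe_def)
  have QeW: "emeasure Qe W = ennreal ((1 - e) * p)"
    using emhe[OF WP, of e] e WL PW pq by (simp add: Qe_def ennreal_mult)
  have QeT: "emeasure Qe {lo..hi} = 1"
  proof -
    have "emeasure Qe {lo..hi} = ennreal ((1 - e) * p + (e / q + (1 - e)) * q)"
      using emhe[of "{lo..hi}" e] sets.top[of P] space_P WLT PW PL e pq
      by (simp add: Qe_def ennreal_mult ennreal_plus)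
    also have "(1 - e) * p + (e / q + (1 - e)) * q = 1" using pq by (simp add: q_def field_simps)
    finally show ?thesis by simp
  qed
  have Qe: "Qe \<in> amb"
    unfolding amb_iff
  proof (intro conjI)
    show "space Qe = {lo..hi}" "sets Qe = sets M" using space_P sets_P by (auto simp: Qe_def)
    then show "prob_space Qe" using QeT by (intro prob_spaceI) simp
    show "D Qe P \<le> ennreal \<eta>" by (rule DQe)
  qed
  have "Xm i t \<le> (\<integral>y. x i t y \<partial>Qe)" unfolding Xm_def' by (rule wst_le[OF Qe x_bm[OF i t]])
  also have "\<dots> = measure Qe W" unfolding W_def by (rule W_int[OF Qe i t])
  also have "\<dots> = (1 - e) * p" using QeW e pq by (simp add: measure_def)
  also have "\<dots> < p" using e pq by simp
  also have "p = Xbar P x i t" using Xbar_W[OF i t] by (simp add: p_def W_def)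
  finally show ?thesis .
qed

end


context pset begin

lemma rule_meas_PP: assumes "bounded_measurable_rule lo hi tt" "i \<in> {1,2}"
  shows "(\<lambda>z. tt i (fst z) (snd z)) \<in> borel_measurable (P \<Otimes>\<^sub>M P)"
proof -
  have m: "(\<lambda>z. tt i (fst z) (snd z)) \<in> borel_measurable (M \<Otimes>\<^sub>M M)"
    using assms by (auto simp: bounded_measurable_rule_def Theta_def)
  have "sets (P \<Otimes>\<^sub>M P) = sets (M \<Otimes>\<^sub>M M)" by (intro sets_pair_measure_cong sets_P)
  then have "borel_measurable (P \<Otimes>\<^sub>M P) = borel_measurable (M \<Otimes>\<^sub>M M)"
    by (intro measurable_cong_sets) auto
  then show ?thesis using m by (metis (no_types))
qed

lemma hi_in: "hi \<in> {lo..hi}" using lo_hi by simp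

lemma obj_le: assumes "transfer_rule lo hi t1" "transfer_rule lo hi t2"
  and "\<And>i. i \<in> {1,2} \<Longrightarrow> AE \<theta> in P. Tbar P t1 i \<theta> \<le> Tbar P t2 i \<theta>"
  shows "objective P t1 \<le> objective P t2"
proof -
  have "(\<integral>\<theta>. Tbar P t1 i \<theta> \<partial>P) \<le> (\<integral>\<theta>. Tbar P t2 i \<theta> \<partial>P)" if i: "i \<in> {1,2}" for i
    by (rule integral_mono_AE) (use Tbar_meas[OF assms(1) i] Tbar_meas[OF assms(2) i] assms(3)[OF i] in auto)
  from this[of 1] this[of 2] show ?thesis by (simp add: objective_def)
qed

lemma Tbar_le_tstar: assumes i: "i \<in> {1,2}" and tr: "transfer_rule lo hi tt"
  and wf: "winner_favored lo hi x tt" and U: "\<And>\<theta>. \<theta> \<in> {lo..hi} \<Longrightarrow> Ui i \<theta> \<le> Umin lo hi D P \<eta> x tt i \<theta>"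
  shows "AE \<theta> in P. Tbar P tt i \<theta> \<le> Tbar P (tstar lo hi D P \<eta> x) i \<theta>"
  using AE_neq[OF P_amb hi_in] AE_space
proof eventually_elim
  case (elim \<theta>)
  then have th: "\<theta> \<in> {lo..hi}" "\<theta> < hi" using space_P by auto
  show ?case using core[OF i th tr wf] U[OF th(1)] by (simp add: Tbar_tstar tw_eq)
qed

lemma incr: assumes i: "i \<in> {1,2}" and r: "r \<in> {lo..hi}" and s: "s \<in> {lo..hi}"
  shows "(s - r) * Xm i r \<le> Ui i s - Ui i r"
proof (cases "r \<le> s")
  case True
  have "Ui i r + integral {r..s} (Xm i) = Ui i s"
    by (rule Henstock_Kurzweil_Integration.integral_combine) (use True r s Xm_integrable[OF i] in auto)
  moreover have "integral {r..s} (\<lambda>_. Xm i r) \<le> integral {r..s} (Xm i)"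
  proof (rule integral_le)
    show "Xm i integrable_on {r..s}" using Xm_integrable[OF i] r s by auto
    fix y assume "y \<in> {r..s}"
    then show "Xm i r \<le> Xm i y" using mono_onD[OF Xm_mono[OF i]] r s by auto
  qed (rule integrable_const_ivl)
  ultimately show ?thesis using True by simp
next
  case False
  have "Ui i s + integral {s..r} (Xm i) = Ui i r"
    by (rule Henstock_Kurzweil_Integration.integral_combine) (use False r s Xm_integrable[OF i] in auto)
  moreover have "integral {s..r} (Xm i) \<le> integral {s..r} (\<lambda>_. Xm i r)"
  proof (rule integral_le)
    show "Xm i integrable_on {s..r}" using Xm_integrable[OF i] r s by auto
    fix y assume "y \<in> {s..r}"
    then show "Xm i y \<le> Xm i r" using mono_onD[OF Xm_mono[OF i]] r s by auto
  qed (rule integrable_const_ivl)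
  ultimately show ?thesis using False by (simp add: algebra_simps)
qed

lemma wf_tstar: "winner_favored lo hi x (tstar lo hi D P \<eta> x)"
  by (simp add: winner_favored_def tstar_eq)

lemma admR_tstar: "admissible_R lo hi D P \<eta> x (tstar lo hi D P \<eta> x)"
  unfolding admissible_R_def
proof (intro conjI tstar_rule wf_tstar ballI)
  show "win_lose_dependent lo hi x (tstar lo hi D P \<eta> x)"
    unfolding win_lose_dependent_def
    by (rule exI[of _ tw], rule exI[of _ "tstar_l lo hi D P \<eta> x"])
       (use lo_pos in \<open>auto simp: tstar_def tstar_l_def tstar_w_def Theta_def\<close>)
  fix i :: nat and \<theta> assume "i \<in> {1,2}" "\<theta> \<in> Theta lo hi"
  then show "Umin lo hi D P \<eta> x (tstar lo hi D P \<eta> x) i \<theta> = Ui i \<theta>"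
    using Umin_tstar by (simp add: Theta_def)
qed

lemma admP_tstar: "admissible_P lo hi D P \<eta> x (tstar lo hi D P \<eta> x)"
  unfolding admissible_P_def feasible_def
proof (intro conjI tstar_rule wf_tstar)
  show "individually_rational lo hi D P \<eta> x (tstar lo hi D P \<eta> x)"
    unfolding individually_rational_def Theta_def using Umin_tstar Ui_bounds by auto
  show "incentive_compatible lo hi D P \<eta> x (tstar lo hi D P \<eta> x)"
    unfolding incentive_compatible_def Theta_def
  proof (intro ballI)
    fix i :: nat and \<theta> \<theta>h assume i: "i \<in> {1,2}" and th: "\<theta> \<in> {lo..hi}" "\<theta>h \<in> {lo..hi}"
    have "wst (\<lambda>y. \<theta> * x i \<theta>h y - tstar lo hi D P \<eta> x i \<theta>h y) = wst (\<lambda>y. (- tw i \<theta>h) + \<theta> * x i \<theta>h y)"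
      by (simp add: tstar_eq algebra_simps)
    also have "\<dots> = - tw i \<theta>h + \<theta> * Xm i \<theta>h"
      using wst_affine[OF x_bm[OF i th(2)], of \<theta> "- tw i \<theta>h"] th lo_pos by (simp add: Xm_def')
    also have "\<dots> \<le> Ui i \<theta>" using incr[OF i th(2) th(1)] by (simp add: tw_eq algebra_simps)
    also have "\<dots> = wst (\<lambda>y. \<theta> * x i \<theta> y - tstar lo hi D P \<eta> x i \<theta> y)"
      using Umin_tstar[OF i th(1)] by (simp add: Umin_def)
    finally show "wst (\<lambda>y. \<theta> * x i \<theta>h y - tstar lo hi D P \<eta> x i \<theta>h y)
        \<le> wst (\<lambda>y. \<theta> * x i \<theta> y - tstar lo hi D P \<eta> x i \<theta> y)" .
  qed
qed

lemma solvesR_tstar: "solves_R lo hi D P \<eta> x (tstar lo hi D P \<eta> x)"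
  unfolding solves_R_def
proof (intro conjI admR_tstar allI impI)
  fix t' assume a: "admissible_R lo hi D P \<eta> x t'"
  show "objective P t' \<le> objective P (tstar lo hi D P \<eta> x)"
  proof (rule obj_le)
    show "transfer_rule lo hi t'" using a by (simp add: admissible_R_def)
    show "transfer_rule lo hi (tstar lo hi D P \<eta> x)" by (rule tstar_rule)
    fix i :: nat assume i: "i \<in> {1,2}"
    show "AE \<theta> in P. Tbar P t' i \<theta> \<le> Tbar P (tstar lo hi D P \<eta> x) i \<theta>"
      using a i by (intro Tbar_le_tstar) (auto simp: admissible_R_def Theta_def)
  qed
qed

lemma solvesP_tstar: "solves_P lo hi D P \<eta> x (tstar lo hi D P \<eta> x)"
  unfolding solves_P_def
proof (intro conjI admP_tstar allI impI)
  fix t' assume a: "admissible_P lo hi D P \<eta> x t'"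
  show "objective P t' \<le> objective P (tstar lo hi D P \<eta> x)"
  proof (rule obj_le)
    show tr: "transfer_rule lo hi t'" using a by (simp add: admissible_P_def)
    show "transfer_rule lo hi (tstar lo hi D P \<eta> x)" by (rule tstar_rule)
    fix i :: nat assume i: "i \<in> {1,2}"
    show "AE \<theta> in P. Tbar P t' i \<theta> \<le> Tbar P (tstar lo hi D P \<eta> x) i \<theta>"
      using a i tr Ulower[OF i tr] by (intro Tbar_le_tstar) (auto simp: admissible_P_def)
  qed
qed

lemma unique:
  assumes sR: "solves_R lo hi D P \<eta> x t" and i: "i \<in> {1,2}"
  shows "AE z in P \<Otimes>\<^sub>M P. t i (fst z) (snd z) = tstar lo hi D P \<eta> x i (fst z) (snd z)"
proof -
  interpret P: prob_space P by (rule prob_P)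
  interpret PP: pair_sigma_finite P P by (simp add: pair_sigma_finite_def P.sigma_finite_measure_axioms)
  let ?ts = "tstar lo hi D P \<eta> x"
  have aR: "admissible_R lo hi D P \<eta> x t" using sR by (simp add: solves_R_def)
  have tr: "transfer_rule lo hi t" using aR by (simp add: admissible_R_def)
  have wf: "winner_favored lo hi x t" using aR by (simp add: admissible_R_def)
  have Ueq: "\<And>\<theta>. \<theta> \<in> {lo..hi} \<Longrightarrow> Umin lo hi D P \<eta> x t i \<theta> = Ui i \<theta>"
    using aR i by (cases "i = 1") (auto simp: admissible_R_def Theta_def)
  obtain tw' tl' :: "nat \<Rightarrow> real \<Rightarrow> real" where wl:
    "\<And>\<theta> \<theta>'. \<theta> \<in> {lo..hi} \<Longrightarrow> \<theta>' \<in> {lo..hi} \<Longrightarrow> t i \<theta> \<theta>' = tw' i \<theta> * x i \<theta> \<theta>' + tl' i \<theta> * (1 - x i \<theta> \<theta>')"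
    "\<And>\<theta>. \<theta> \<in> {lo..hi} \<Longrightarrow> \<theta> - tw' i \<theta> \<ge> - tl' i \<theta>"
    using aR i lo_hi unfolding admissible_R_def win_lose_dependent_def Theta_def by fastforce
  have le_all: "AE \<theta> in P. Tbar P t j \<theta> \<le> Tbar P ?ts j \<theta>" if j: "j \<in> {1,2}" for j
    using aR j by (intro Tbar_le_tstar[OF j tr wf]) (auto simp: admissible_R_def Theta_def)
  have int_le: "(\<integral>\<theta>. Tbar P t j \<theta> \<partial>P) \<le> (\<integral>\<theta>. Tbar P ?ts j \<theta> \<partial>P)" if j: "j \<in> {1,2}" for j
    by (rule integral_mono_AE) (use Tbar_meas[OF tr j] Tbar_meas[OF tstar_rule j] le_all[OF j] in auto)
  have "objective P ?ts \<le> objective P t" using sR admR_tstar by (simp add: solves_R_def)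
  moreover have "objective P t \<le> objective P ?ts" using solvesR_tstar aR by (simp add: solves_R_def)
  ultimately have "objective P t = objective P ?ts" by simp
  then have "(\<integral>\<theta>. Tbar P t i \<theta> \<partial>P) = (\<integral>\<theta>. Tbar P ?ts i \<theta> \<partial>P)"
    using int_le[of 1] int_le[of 2] i by (auto simp: objective_def)
  then have "(\<integral>\<theta>. Tbar P ?ts i \<theta> - Tbar P t i \<theta> \<partial>P) = 0"
    using Tbar_meas[OF tr i] Tbar_meas[OF tstar_rule i] by simp
  then have AEeq: "AE \<theta> in P. Tbar P ?ts i \<theta> - Tbar P t i \<theta> = 0"
    using integral_nonneg_eq_0_iff_AE[of P "\<lambda>\<theta>. Tbar P ?ts i \<theta> - Tbar P t i \<theta>"]
      Tbar_meas[OF tr i] Tbar_meas[OF tstar_rule i] le_all[OF i] by auto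
  have inner: "AE \<theta> in P. AE \<theta>' in P. t i \<theta> \<theta>' = ?ts i \<theta> \<theta>'"
    using AEeq AE_neq[OF P_amb hi_in] AE_space
  proof eventually_elim
    case (elim \<theta>)
    then have th: "\<theta> \<in> {lo..hi}" "\<theta> \<noteq> hi" and TT: "Tbar P t i \<theta> = tw i \<theta>"
      using space_P by (auto simp: Tbar_tstar)
    define a where "a = tw' i \<theta>"
    define b where "b = tl' i \<theta>"
    have eqs: "\<And>s. s \<in> {lo..hi} \<Longrightarrow> t i \<theta> s = a * x i \<theta> s + b * (1 - x i \<theta> s)" "\<theta> - a \<ge> - b"
      using wl[OF th(1)] by (auto simp: a_def b_def)
    have Um: "Umin lo hi D P \<eta> x t i \<theta> = - b + (\<theta> - a + b) * Xm i \<theta>"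
      and Tb: "Tbar P t i \<theta> = b + (a - b) * Xbar P x i \<theta>"
      using wld_Umin[OF i th(1) tr eqs] by auto
    have twb: "tw i \<theta> = b + (a - b) * Xm i \<theta>" using Um Ueq[OF th(1)] by (simp add: tw_eq algebra_simps)
    have key: "(a - b) * (Xbar P x i \<theta> - Xm i \<theta>) = 0" using TT Tb twb by (simp add: algebra_simps)
    show ?case
    proof (cases "a = b")
      case True
      show ?thesis using AE_space
        by eventually_elim (use eqs(1) True twb space_P in \<open>auto simp: tstar_eq algebra_simps\<close>)
    next
      case False
      then have XX: "Xbar P x i \<theta> = Xm i \<theta>" using key by simp
      define W where "W = Wset i \<theta>"
      have WP: "W \<in> sets P" using W_sets[OF i th(1)] sets_P by (simp add: W_def)
      have pW: "Xbar P x i \<theta> = measure P W" using Xbar_W[OF i th(1)] by (simp add: W_def)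
      consider "measure P W = 0" | "measure P W = 1" | "0 < measure P W \<and> measure P W < 1"
        using P.prob_le_1[of W] measure_nonneg[of P W] by linarith
      then show ?thesis
      proof cases
        case 1
        then have Xm0: "Xm i \<theta> = 0" using XX pW by simp
        have WN: "W \<in> null_sets P" using 1 WP by (simp add: null_sets_def P.emeasure_eq_measure)
        show ?thesis using AE_not_in[OF WN] W_AE[OF P_amb i th(1)] AE_space
          by eventually_elim (use eqs(1) twb Xm0 space_P in \<open>auto simp: tstar_eq W_def\<close>)
      next
        case 2
        then have "Xbar P x i \<theta> = 1" using pW by simp
        then have "\<theta> = hi" using AX i th(1) by (cases "i = 1") (auto simp: assumption_X_def Theta_def)
        then show ?thesis using th(2) by simp
      next
        case 3
        then have "Xm i \<theta> < Xbar P x i \<theta>" using strict[OF i th(1)] by (simp add: W_def)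
        then show ?thesis using XX by simp
      qed
    qed
  qed
  show ?thesis
  proof (rule PP.AE_pair_measure)
    show "{z \<in> space (P \<Otimes>\<^sub>M P). t i (fst z) (snd z) = ?ts i (fst z) (snd z)} \<in> sets (P \<Otimes>\<^sub>M P)"
      using rule_meas_PP[OF tr[unfolded transfer_rule_def] i]
        rule_meas_PP[OF tstar_rule[unfolded transfer_rule_def] i]
      by (rule measurable_equality_set)
    show "AE x in P. AE y in P. t i (fst (x, y)) (snd (x, y)) = ?ts i (fst (x, y)) (snd (x, y))"
      using inner by simp
  qed
qed

end


theorem proposition4:
  fixes lo hi \<eta> :: real
    and D :: "real measure \<Rightarrow> real measure \<Rightarrow> ennreal"
    and P :: "real measure"
    and x :: "nat \<Rightarrow> real \<Rightarrow> real \<Rightarrow> real"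
  assumes "0 < lo" and "lo < hi"
    and "assumption_D lo hi D"
    and "P \<in> Delta lo hi (BTheta lo hi)" and "atomless P"
    and "0 < \<eta>"
    and "allocation_rule lo hi x"
    and "assumption_X lo hi D P \<eta> x"
  shows "solves_R lo hi D P \<eta> x (tstar lo hi D P \<eta> x)
    \<and> (\<forall>t. solves_R lo hi D P \<eta> x t \<longrightarrow>
          (\<forall>i\<in>{1,2}. AE z in P \<Otimes>\<^sub>M P. t i (fst z) (snd z) = tstar lo hi D P \<eta> x i (fst z) (snd z)))
    \<and> solves_P lo hi D P \<eta> x (tstar lo hi D P \<eta> x)"
proof -
  interpret pset lo hi D P \<eta> x
    by (unfold_locales) (use assms in auto)
  show ?thesis using solvesR_tstar unique solvesP_tstar by blast
qed

end
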